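(* Let $n\in\mathbb{N}$, let $\mathbf{s}=(s_0,\ldots,s_n)\subset[0,\infty)$ be strictly positive on $(0,\infty)$ and let $s_{-1}\in[0,\infty)$. Then the following are equivalent: (i) $\mathbf{s}'=(s_{-1},s_0,\ldots,s_n)$ (with $s_{-1}$ as zeroth term) is positive but not strictly positive on $(0,\infty)$; (ii) $n$ is odd and $s_{-1}=t_\infty(\mathbf{s})$. Moreover, if (i) holds and $n=2m-1$, then $\mathcal{M}_\infty(\mathbf{s}')$ has a unique element and its atoms are the roots of $Q(t)=\det\begin{bmatrix}s_0&s_1&\cdots&s_{m-1}&1\\ s_1&s_2&\cdots&s_m&t\\ \vdots&&&&\vdots\\ s_m&s_{m+1}&\cdots&s_{2m-1}&t^m\end{bmatrix}$.
   Context: For $a<b$ and $\mathbf{u}=(u_0,\ldots,u_k)$, $\mathbf{u}$ is positive on $[a,b]$ if $\sigma(x^j)=u_j$ defines a functional nonnegative on real polynomials of degree $\le k$ that are nonnegative on $[a,b]$, strictly positive if moreover $\sigma(P)>0$ for such $P\not\equiv0$; (strictly) positive on $(0,\infty)$ means (strictly) positive on some $[a,b]\subset(0,\infty)$. $\mathcal{M}_{a,b}(\mathbf{u})$: positive Borel measures on $[a,b]$ with $j$-th moments $u_j$; $\mathcal{M}_\infty(\mathbf{u})$: positive Borel measures on $(0,\infty)$ supported in a compact subinterval of $(0,\infty)$ with $j$-th moments $u_j$. $t_{a,b}(\mathbf{u})=\inf\{\int\frac1t\,d\mu:\mu\in\mathcal{M}_{a,b}(\mathbf{u})\}$ ($\inf\varnothing=\infty$),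 $t_\infty(\mathbf{u})=\inf_{0<a<b}t_{a,b}(\mathbf{u})$. *)

theory Defs
  imports "HOL-Probability.Probability" "Jordan_Normal_Form.Determinant"
begin

text \<open>A finite sequence u = (u_0,...,u_k) is represented by a list of length k+1.
  The functional sigma on polynomials of degree at most k: sigma(x^j) = u_j.\<close>

definition seq_functional :: "real list \<Rightarrow> real poly \<Rightarrow> real" where
  "seq_functional u P = (\<Sum>j<length u. coeff P j * u ! j)"

definition positive_on :: "real \<Rightarrow> real \<Rightarrow> real list \<Rightarrow> bool" where
  "positive_on a b u \<longleftrightarrow>
     (\<forall>P::real poly. degree P < length u \<and> (\<forall>x\<in>{a..b}. poly P x \<ge> 0)
        \<longrightarrow> seq_functional u P \<ge> 0)"

definition strictly_positive_on :: "real \<Rightarrow> real \<Rightarrow> real list \<Rightarrow> bool" where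
  "strictly_positive_on a b u \<longleftrightarrow> positive_on a b u \<and>
     (\<forall>P::real poly. degree P < length u \<and> (\<forall>x\<in>{a..b}. poly P x \<ge> 0) \<and> P \<noteq> 0
        \<longrightarrow> seq_functional u P > 0)"

definition positive_on_pos_reals :: "real list \<Rightarrow> bool" where
  "positive_on_pos_reals u \<longleftrightarrow> (\<exists>a b. 0 < a \<and> a < b \<and> positive_on a b u)"

definition strictly_positive_on_pos_reals :: "real list \<Rightarrow> bool" where
  "strictly_positive_on_pos_reals u \<longleftrightarrow> (\<exists>a b. 0 < a \<and> a < b \<and> strictly_positive_on a b u)"

definition moment_measures :: "real \<Rightarrow> real \<Rightarrow> real list \<Rightarrow> real measure set" where
  "moment_measures a b u = {M. sets M = sets borel \<and> finite_measure M \<and>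
      emeasure M (UNIV - {a..b}) = 0 \<and>
      (\<forall>j<length u. integrable M (\<lambda>x. x ^ j) \<and> (\<integral>x. x ^ j \<partial>M) = u ! j)}"

definition moment_measures_pos_reals :: "real list \<Rightarrow> real measure set" where
  "moment_measures_pos_reals u = (\<Union>a\<in>{0<..}. \<Union>b\<in>{a<..}. moment_measures a b u)"

definition t_ab :: "real \<Rightarrow> real \<Rightarrow> real list \<Rightarrow> ereal" where
  "t_ab a b u = Inf ((\<lambda>M. ereal (\<integral>t. 1 / t \<partial>M)) ` moment_measures a b u)"

definition t_infty :: "real list \<Rightarrow> ereal" where
  "t_infty u = (INF a\<in>{0<..}. INF b\<in>{a<..}. t_ab a b u)"

definition Q_det :: "real list \<Rightarrow> nat \<Rightarrow> real \<Rightarrow> real" where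
  "Q_det s m t = Determinant.det (Matrix.mat (m+1) (m+1)
      (\<lambda>(i,j). if j < m then s ! (i + j) else t ^ i))"

definition atoms :: "real measure \<Rightarrow> real set" where
  "atoms M = {x. emeasure M {x} > 0}"

end

theory Submission
  imports Defs
begin


lemma sf_add: "seq_functional u (P + R) = seq_functional u P + seq_functional u R"
  by (simp add: seq_functional_def algebra_simps sum.distrib)
lemma sf_smult: "seq_functional u (Polynomial.smult c P) = c * seq_functional u P"
  by (simp add: seq_functional_def sum_distrib_left algebra_simps)
lemma sf_zero[simp]: "seq_functional u 0 = 0"
  by (simp add: seq_functional_def)
lemma sf_minus: "seq_functional u (-P) = - seq_functional u P"
  by (simp add: seq_functional_def sum_negf)
lemma sf_diff: "seq_functional u (P - R) = seq_functional u P - seq_functional u R"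
  by (simp add: seq_functional_def algebra_simps sum_subtractf)
lemma sf_sum: "seq_functional u (\<Sum>i\<in>A. f i) = (\<Sum>i\<in>A. seq_functional u (f i))"
  by (induction A rule: infinite_finite_induct) (auto simp: sf_add)
lemma sf_monom: "j < length u \<Longrightarrow> seq_functional u (monom c j) = c * u!j"
  by (simp add: seq_functional_def coeff_monom if_distrib[of "\<lambda>x. x * _"] cong: if_cong)
lemma sf_shift: "seq_functional (c # s) (pCons a R) = c * a + seq_functional s R"
  unfolding seq_functional_def length_Cons sum.lessThan_Suc_shift by (simp add: mult.commute)

definition rep :: "real list \<Rightarrow> real set \<Rightarrow> (real \<Rightarrow> real) \<Rightarrow> bool" where
  "rep u X w \<longleftrightarrow> finite X \<and> (\<forall>P. degree P < length u \<longrightarrow> seq_functional u P = (\<Sum>x\<in>X. w x * poly P x))"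

definition lag :: "real set \<Rightarrow> real \<Rightarrow> real poly" where
  "lag S x = Polynomial.smult (1 / (\<Prod>y\<in>S-{x}. (x - y))) (\<Prod>y\<in>S-{x}. [:-y,1:])"

lemma poly_lag: assumes "finite S" "x \<in> S" "z \<in> S"
  shows "poly (lag S x) z = (if z = x then 1 else 0)"
proof (cases "z = x")
  case True
  have "(\<Prod>y\<in>S-{x}. (x - y)) \<noteq> 0" using assms by (auto simp: prod_zero_iff)
  then show ?thesis using True by (simp add: lag_def poly_prod)
next
  case False
  then have "(\<Prod>y\<in>S-{x}. (z - y)) = 0" using assms by (auto simp: prod_zero_iff)
  then show ?thesis using False by (simp add: lag_def poly_prod)
qed

lemma degree_lag: assumes "finite S" "x \<in> S" shows "degree (lag S x) \<le> card S - 1"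
proof -
  have "degree (\<Prod>y\<in>S-{x}. [:-y,1::real:]) \<le> sum (degree \<circ> (\<lambda>y. [:-y,1::real:])) (S-{x})"
    by (rule degree_prod_sum_le) (use assms in auto)
  also have "\<dots> = card (S - {x})" by simp
  also have "\<dots> = card S - 1" using assms by simp
  finally show ?thesis by (simp add: lag_def)
qed

lemma poly_zero_many_roots:
  fixes P :: "real poly"
  assumes "finite S" "degree P < card S" "\<forall>x\<in>S. poly P x = 0" shows "P = 0"
proof (rule ccontr)
  assume "P \<noteq> 0"
  then have "card {x. poly P x = 0} \<le> degree P" by (rule card_poly_roots_bound)
  moreover have "card S \<le> card {x. poly P x = 0}"
    using assms \<open>P \<noteq> 0\<close> by (intro card_mono poly_roots_finite) auto
  ultimately show False using assms by linarith
qed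

lemma interp: assumes "finite S" "degree P < card S"
  shows "P = (\<Sum>x\<in>S. Polynomial.smult (poly P x) (lag S x))"
proof -
  let ?D = "P - (\<Sum>x\<in>S. Polynomial.smult (poly P x) (lag S x))"
  have "\<And>x. x \<in> S \<Longrightarrow> degree (Polynomial.smult (poly P x) (lag S x)) \<le> card S - 1"
    using degree_lag[OF assms(1)] degree_smult_le order.trans by blast
  then have d1: "degree (\<Sum>x\<in>S. Polynomial.smult (poly P x) (lag S x)) \<le> card S - 1"
    by (intro degree_sum_le) (use assms in auto)
  have d2: "degree P \<le> card S - 1" using assms by linarith
  have "degree ?D \<le> card S - 1" using degree_diff_le[OF d2 d1] .
  then have "degree ?D < card S" using assms by linarith
  moreover have "\<forall>z\<in>S. poly ?D z = 0"
  proof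
    fix z assume z: "z \<in> S"
    have "poly (\<Sum>x\<in>S. Polynomial.smult (poly P x) (lag S x)) z = (\<Sum>x\<in>S. poly P x * (if z = x then 1 else 0))"
      using assms z by (simp add: poly_sum poly_lag)
    also have "\<dots> = poly P z" using assms z by (simp add: if_distrib cong: if_cong)
    finally show "poly ?D z = 0" by simp
  qed
  ultimately have "?D = 0" using assms by (intro poly_zero_many_roots[of S]) auto
  then show ?thesis by simp
qed

lemma interp_poly: assumes "finite S" "degree P < card S"
  shows "poly P t = (\<Sum>x\<in>S. poly P x * poly (lag S x) t)"
  by (subst interp[OF assms]) (simp add: poly_sum)

lemma nonneg_root_order:
  fixes P :: "real poly"
  assumes "P \<noteq> 0" "poly P z = 0" "a < z" "z < b" "\<forall>x\<in>{a<..<b}. poly P x \<ge> 0"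
  shows "order z P \<ge> 2"
proof -
  have "poly (pderiv P) z = 0"
  proof (rule DERIV_local_min[OF poly_DERIV])
    show "0 < min (z - a) (b - z)" using assms by simp
    show "\<forall>y. \<bar>z - y\<bar> < min (z - a) (b - z) \<longrightarrow> poly P z \<le> poly P y"
      using assms by (auto simp: abs_if split: if_splits)
  qed
  moreover have "pderiv P \<noteq> 0"
  proof
    assume "pderiv P = 0"
    then have "degree P = 0" by (simp add: pderiv_eq_0_iff)
    then obtain c where "P = [:c:]" by (metis degree_eq_zeroE)
    then show False using assms by auto
  qed
  ultimately have "order z (pderiv P) > 0" by (simp add: order_gt_0_iff)
  then show ?thesis using order_pderiv[OF assms(1,2)] by simp
qed

lemma orders_degree:
  fixes P :: "real poly"
  assumes "finite Z" "P \<noteq> 0" "\<forall>z\<in>Z. order z P \<ge> 2"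
  shows "2 * card Z \<le> degree P"
  using assms
proof (induction Z arbitrary: P rule: finite_induct)
  case empty then show ?case by simp
next
  case (insert z Z)
  have "[:-z,1:]^2 dvd P"
    using order_1[of z P] insert.prems power_le_dvd by blast
  then obtain P' where P': "P = [:-z,1:]^2 * P'" by (elim dvdE)
  have "P' \<noteq> 0" using P' insert.prems by auto
  have "\<forall>y\<in>Z. order y P' \<ge> 2"
  proof
    fix y assume y: "y \<in> Z"
    then have "y \<noteq> z" using insert by auto
    have "order y P = order y ([:-z,1:]^2) + order y P'"
      using P' insert.prems by (simp add: order_mult)
    moreover have "order y ([:-z,1:]^2) = 0"
      using \<open>y \<noteq> z\<close> by (intro order_0I) simp
    ultimately show "order y P' \<ge> 2" using insert.prems y by auto
  qed
  then have "2 * card Z \<le> degree P'" using insert.IH \<open>P' \<noteq> 0\<close> by blast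
  moreover have "degree P = 2 + degree P'"
    using P' \<open>P' \<noteq> 0\<close> by (simp add: degree_mult_eq degree_linear_power)
  ultimately show ?case using insert by simp
qed

lemma mix_pos:
  assumes "rep u S w" "\<forall>x\<in>S. w x \<ge> 0" "S \<subseteq> {a..b}"
  shows "positive_on a b u"
  unfolding positive_on_def
proof (intro allI impI)
  fix P :: "real poly" assume P: "degree P < length u \<and> (\<forall>x\<in>{a..b}. 0 \<le> poly P x)"
  then have "seq_functional u P = (\<Sum>x\<in>S. w x * poly P x)" using assms unfolding rep_def by auto
  also have "\<dots> \<ge> 0" using assms P by (intro sum_nonneg) auto
  finally show "seq_functional u P \<ge> 0" .
qed

lemma mix_strict:
  assumes "rep u S w" "\<forall>x\<in>S. w x \<ge> 0" "S \<subseteq> {a..b}" "Z \<subseteq> S" "Z \<subseteq> {a<..<b}"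
    "\<forall>z\<in>Z. w z > 0" "length u \<le> 2 * card Z"
  shows "strictly_positive_on a b u"
  unfolding strictly_positive_on_def
proof (intro conjI allI impI)
  show "positive_on a b u" using mix_pos assms by blast
  fix P :: "real poly" assume P: "degree P < length u \<and> (\<forall>x\<in>{a..b}. 0 \<le> poly P x) \<and> P \<noteq> 0"
  have fin: "finite S" using assms unfolding rep_def by auto
  have eq: "seq_functional u P = (\<Sum>x\<in>S. w x * poly P x)" using assms P unfolding rep_def by auto
  have nn: "\<forall>x\<in>S. w x * poly P x \<ge> 0" using assms P by auto
  show "seq_functional u P > 0"
  proof (rule ccontr)
    assume neg: "\<not> seq_functional u P > 0"
    have ge: "(\<Sum>x\<in>S. w x * poly P x) \<ge> 0" using nn by (intro sum_nonneg) blast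
    have le: "(\<Sum>x\<in>S. w x * poly P x) \<le> 0" using neg unfolding eq by (simp only: not_less)
    have "(\<Sum>x\<in>S. w x * poly P x) = 0" using le ge by (rule antisym)
    moreover have "(\<Sum>x\<in>S. w x * poly P x) = 0 \<longleftrightarrow> (\<forall>x\<in>S. w x * poly P x = 0)"
      by (rule sum_nonneg_eq_0_iff[OF fin]) (use nn in blast)
    ultimately have z0: "\<forall>x\<in>S. w x * poly P x = 0" by blast
    have "\<forall>z\<in>Z. poly P z = 0"
    proof
      fix z assume z: "z \<in> Z"
      then have "z \<in> S" "w z > 0" using assms(4,6) by auto
      then show "poly P z = 0" using z0 by auto
    qed
    then have "\<forall>z\<in>Z. order z P \<ge> 2"
      using assms P by (intro ballI nonneg_root_order) auto
    then have "2 * card Z \<le> degree P" using orders_degree[of Z P] P fin assms finite_subset by blast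
    then show False using P assms by linarith
  qed
qed



lemma nonneg_closure:
  fixes h :: "real poly"
  assumes "a < b" "\<forall>x\<in>{a<..<b}. poly h x \<ge> 0" shows "\<forall>x\<in>{a..b}. poly h x \<ge> 0"
proof
  fix x assume x: "x \<in> {a..b}"
  show "poly h x \<ge> 0"
    by (rule continuous_ge_on_closure[of "{a<..<b}" "poly h" x 0]) (use assms x in \<open>auto intro: continuous_intros\<close>)
qed

lemma order_linear_prod:
  fixes R :: "real set"
  assumes "finite R" shows "order y (\<Prod>z\<in>R. [:-z,1:]) = (if y \<in> R then 1 else 0)"
  using assms
proof (induction R rule: finite_induct)
  case empty then show ?case by (simp add: order_0I)
next
  case (insert z R)
  have ne: "(\<Prod>z\<in>R. [:-z,1::real:]) \<noteq> 0" using insert by (auto simp: prod_zero_iff)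
  have eq: "(\<Prod>z\<in>insert z R. [:-z,1::real:]) = [:-z,1:] * (\<Prod>z\<in>R. [:-z,1:])"
    using insert by simp
  have "order y (\<Prod>z\<in>insert z R. [:-z,1:]) = order y [:-z,1:] + order y (\<Prod>z\<in>R. [:-z,1:])"
    unfolding eq using ne by (intro order_mult) (simp only: mult_eq_0_iff pCons_eq_0_iff, simp)
  moreover have "order y [:-z,1::real:] = (if y = z then 1 else 0)"
    using order_power_n_n[of z 1] by (auto intro: order_0I)
  ultimately show ?case using insert by auto
qed

lemma degree_linear_prod:
  fixes R :: "real set"
  assumes "finite R" shows "degree (\<Prod>z\<in>R. [:-z,1:]) = card R"
  using assms
proof (induction R rule: finite_induct)
  case empty then show ?case by simp
next
  case (insert z R)
  have ne: "(\<Prod>z\<in>R. [:-z,1::real:]) \<noteq> 0" using insert by (auto simp: prod_zero_iff)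
  have eq: "(\<Prod>z\<in>insert z R. [:-z,1::real:]) = [:-z,1:] * (\<Prod>z\<in>R. [:-z,1:])"
    using insert by simp
  show ?case unfolding eq using ne insert by (subst degree_mult_eq) auto
qed

lemma ns_lemma:
  fixes h :: "real poly"
  assumes "h \<noteq> 0" "\<forall>z\<in>{a<..<b}. even (order z h)"
  shows "(\<forall>x\<in>{a<..<b}. poly h x \<ge> 0) \<or> (\<forall>x\<in>{a<..<b}. poly h x \<le> 0)"
  using assms
proof (induction "degree h" arbitrary: h rule: less_induct)
  case less
  show ?case
  proof (cases "\<exists>z\<in>{a<..<b}. poly h z = 0")
    case True
    then obtain z where z: "z \<in> {a<..<b}" "poly h z = 0" by blast
    then have "order z h \<noteq> 0" using less.prems order_root by blast
    moreover have "even (order z h)" using less.prems(2) z by blast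
    ultimately have o2: "order z h \<ge> 2" by presburger
    have "[:-z,1:]^2 dvd h" using order_1[of z h] o2 power_le_dvd by blast
    then obtain h' where h': "h = [:-z,1:]^2 * h'" by (elim dvdE)
    have "h' \<noteq> 0" using h' less.prems by auto
    have deg: "degree h = 2 + degree h'" using h' \<open>h' \<noteq> 0\<close> by (simp add: degree_mult_eq degree_linear_power)
    have "\<forall>y\<in>{a<..<b}. even (order y h')"
    proof
      fix y assume y: "y \<in> {a<..<b}"
      have "order y h = order y ([:-z,1:]^2) + order y h'" using h' less.prems by (simp add: order_mult)
      moreover have "order y ([:-z,1::real:]^2) = (if y = z then 2 else 0)"
        using order_power_n_n[of z 2] by (auto intro: order_0I)
      moreover have "even (order y h)" using less.prems(2) y by blast
      ultimately show "even (order y h')" by (auto split: if_splits)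
    qed
    then have IH: "(\<forall>x\<in>{a<..<b}. poly h' x \<ge> 0) \<or> (\<forall>x\<in>{a<..<b}. poly h' x \<le> 0)"
      using less.hyps[of h'] deg \<open>h' \<noteq> 0\<close> by auto
    have sq: "poly ([:-z,1:]^2) x \<ge> (0::real)" for x by simp
    show ?thesis using IH h' sq by (auto simp: mult_nonneg_nonneg mult_nonneg_nonpos simp del: poly_power)
  next
    case False
    show ?thesis
    proof (rule ccontr)
      assume "\<not> ?thesis"
      then obtain x y where xy: "x \<in> {a<..<b}" "y \<in> {a<..<b}" "poly h x < 0" "poly h y > 0"
        by (auto simp: not_le)
      then have "x \<noteq> y" by auto
      have prod: "poly h x * poly h y < 0" "poly h y * poly h x < 0" using xy by (auto simp: mult_neg_pos mult_pos_neg)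
      show False
      proof (cases "x < y")
        case True
        from poly_IVT[OF True prod(1)] obtain r where "x < r" "r < y" "poly h r = 0" by auto
        then show False using False xy by auto
      next
        case False'': False
        then have "y < x" using \<open>x \<noteq> y\<close> by auto
        from poly_IVT[OF this prod(2)] obtain r where "y < r" "r < x" "poly h r = 0" by auto
        then show False using False xy by auto
      qed
    qed
  qed
qed



definition Amat :: "real list \<Rightarrow> nat \<Rightarrow> real \<Rightarrow> real mat" where
  "Amat s m t = Matrix.mat (m+1) (m+1) (\<lambda>(i,j). if j < m then s ! (i + j) else t ^ i)"

definition qcof :: "real list \<Rightarrow> nat \<Rightarrow> nat \<Rightarrow> real" where
  "qcof s m i = cofactor (Amat s m 0) i m"

definition qpoly :: "real list \<Rightarrow> nat \<Rightarrow> real poly" where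
  "qpoly s m = (\<Sum>i\<le>m. monom (qcof s m i) i)"

lemma cof_indep:
  assumes "\<forall>i<m+1. \<forall>j<m. B $$ (i,j) = s!(i+j)" "B \<in> carrier_mat (m+1) (m+1)"
  shows "cofactor B i m = qcof s m i"
proof -
  have "mat_delete B i m = mat_delete (Amat s m 0) i m"
    by (rule eq_matI) (use assms in \<open>auto simp: mat_delete_def Amat_def\<close>)
  then show ?thesis unfolding qcof_def cofactor_def by simp
qed

lemma Q_poly: "Q_det s m t = poly (qpoly s m) t"
proof -
  have QA: "Q_det s m t = det (Amat s m t)" by (simp add: Q_det_def Amat_def)
  have A: "Amat s m t \<in> carrier_mat (m+1) (m+1)" by (simp add: Amat_def)
  have "det (Amat s m t) = (\<Sum>i<m+1. Amat s m t $$ (i,m) * cofactor (Amat s m t) i m)"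
    by (rule laplace_expansion_column[OF A]) simp
  also have "\<dots> = (\<Sum>i<m+1. t ^ i * qcof s m i)"
  proof (rule sum.cong[OF refl])
    fix i assume i: "i \<in> {..<m+1}"
    have "cofactor (Amat s m t) i m = qcof s m i"
      by (rule cof_indep) (auto simp: Amat_def)
    then show "Amat s m t $$ (i,m) * cofactor (Amat s m t) i m = t ^ i * qcof s m i"
      using i by (simp add: Amat_def)
  qed
  also have "\<dots> = poly (qpoly s m) t"
    by (simp add: qpoly_def poly_sum poly_monom lessThan_Suc_atMost mult.commute)
  finally show ?thesis using QA by simp
qed

lemma orth_monom:
  assumes "j < m" "2*m \<le> length s"
  shows "seq_functional s (monom 1 j * qpoly s m) = 0"
proof -
  define B where "B = Matrix.mat (m+1) (m+1) (\<lambda>(i,k). if k < m then s!(i+k) else s!(i+j))"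
  have Bc: "B \<in> carrier_mat (m+1) (m+1)" by (simp add: B_def)
  have "det B = 0"
  proof (rule det_identical_columns[OF Bc, of j m])
    show "j \<noteq> m" "j < m+1" "m < m+1" using assms by auto
    show "col B j = col B m" by (rule eq_vecI) (use assms in \<open>auto simp: B_def\<close>)
  qed
  moreover have "det B = (\<Sum>i<m+1. B $$ (i,m) * cofactor B i m)"
    by (rule laplace_expansion_column[OF Bc]) simp
  moreover have "\<dots> = (\<Sum>i<m+1. qcof s m i * s!(i+j))"
  proof (rule sum.cong[OF refl])
    fix i assume i: "i \<in> {..<m+1}"
    have "cofactor B i m = qcof s m i"
      by (rule cof_indep) (auto simp: B_def)
    then show "B $$ (i,m) * cofactor B i m = qcof s m i * s!(i+j)"
      using i by (simp add: B_def)
  qed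
  moreover have "seq_functional s (monom 1 j * qpoly s m) = (\<Sum>i\<le>m. qcof s m i * s!(i+j))"
  proof -
    have "monom 1 j * qpoly s m = (\<Sum>i\<le>m. monom (qcof s m i) (i+j))"
      by (simp add: qpoly_def sum_distrib_left mult_monom add.commute)
    then have "seq_functional s (monom 1 j * qpoly s m) = (\<Sum>i\<le>m. seq_functional s (monom (qcof s m i) (i+j)))"
      by (simp add: sf_sum)
    also have "\<dots> = (\<Sum>i\<le>m. qcof s m i * s!(i+j))"
      by (rule sum.cong[OF refl]) (use assms in \<open>auto intro!: sf_monom\<close>)
    finally show ?thesis .
  qed
  ultimately show ?thesis by (simp add: lessThan_Suc_atMost)
qed

lemma orth:
  assumes "degree r < m" "2*m \<le> length s"
  shows "seq_functional s (r * qpoly s m) = 0"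
proof -
  have "r * qpoly s m = (\<Sum>j\<le>degree r. Polynomial.smult (coeff r j) (monom 1 j * qpoly s m))"
  proof -
    have "r * qpoly s m = (\<Sum>j\<le>degree r. monom (coeff r j) j) * qpoly s m"
      by (simp add: poly_as_sum_of_monoms)
    also have "\<dots> = (\<Sum>j\<le>degree r. Polynomial.smult (coeff r j) (monom 1 j * qpoly s m))"
      by (simp add: sum_distrib_right smult_monom_mult)
    finally show ?thesis .
  qed
  then have "seq_functional s (r * qpoly s m) = (\<Sum>j\<le>degree r. coeff r j * seq_functional s (monom 1 j * qpoly s m))"
    by (simp add: sf_sum sf_smult)
  also have "\<dots> = 0" using assms by (auto intro!: sum.neutral simp: orth_monom)
  finally show ?thesis .
qed

lemma coeff_qpoly: "coeff (qpoly s m) m = qcof s m m"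
  by (simp add: qpoly_def coeff_sum coeff_monom)

lemma degree_qpoly: "degree (qpoly s m) \<le> m"
  unfolding qpoly_def by (intro degree_sum_le) (auto intro: order.trans[OF degree_monom_le])

lemma qpoly_lead:
  assumes "strictly_positive_on a b s" "2*m \<le> length s"
  shows "qcof s m m \<noteq> 0"
proof -
  define H where "H = Matrix.mat m m (\<lambda>(i,j). s!(i+j))"
  have Hc: "H \<in> carrier_mat m m" by (simp add: H_def)
  have "mat_delete (Amat s m 0) m m = H"
    by (rule eq_matI) (auto simp: mat_delete_def Amat_def H_def)
  then have qH: "qcof s m m = det H" by (simp add: qcof_def cofactor_def)
  have "det H \<noteq> 0"
  proof
    assume "det H = 0"
    then obtain v where v: "v \<in> carrier_vec m" "v \<noteq> 0\<^sub>v m" "H *\<^sub>v v = 0\<^sub>v m"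
      using det_0_iff_vec_prod_zero[OF Hc] by blast
    define p where "p = (\<Sum>j<m. monom (v$j) j)"
    have cp: "coeff p j = (if j < m then v$j else 0)" for j
      by (simp add: p_def coeff_sum coeff_monom)
    have "\<exists>j<m. v$j \<noteq> 0"
    proof (rule ccontr)
      assume "\<not> ?thesis"
      then have "v = 0\<^sub>v m" using v by (intro eq_vecI) auto
      then show False using v by simp
    qed
    then have "p \<noteq> 0" using cp by (metis coeff_0)
    have "m \<ge> 1" using \<open>\<exists>j<m. v$j \<noteq> 0\<close> by auto
    have dp: "degree p \<le> m - 1"
      unfolding p_def by (intro degree_sum_le) (auto intro: order.trans[OF degree_monom_le])
    have "degree (p * p) < length s"
      using dp assms \<open>m \<ge> 1\<close> degree_mult_le[of p p] by linarith
    moreover have "\<forall>x\<in>{a..b}. poly (p * p) x \<ge> 0" by simp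
    moreover have "p * p \<noteq> 0" using \<open>p \<noteq> 0\<close> by simp
    ultimately have pos: "seq_functional s (p * p) > 0"
      using assms unfolding strictly_positive_on_def by blast
    have "p * p = (\<Sum>i<m. \<Sum>j<m. monom (v$i * v$j) (i+j))"
      by (simp add: p_def sum_product mult_monom)
    then have "seq_functional s (p * p) = (\<Sum>i<m. \<Sum>j<m. v$i * v$j * s!(i+j))"
      using assms by (simp add: sf_sum sf_monom)
    also have "\<dots> = (\<Sum>i<m. v$i * (H *\<^sub>v v)$i)"
    proof (rule sum.cong[OF refl])
      fix i assume i: "i \<in> {..<m}"
      have "(H *\<^sub>v v)$i = (\<Sum>j<m. s!(i+j) * v$j)"
        using i v(1) by (simp add: scalar_prod_def H_def atLeast0LessThan)
      then show "(\<Sum>j<m. v$i * v$j * s!(i+j)) = v$i * (H *\<^sub>v v)$i"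
        by (simp add: sum_distrib_left mult_ac)
    qed
    also have "\<dots> = 0" using v by simp
    finally show False using pos by simp
  qed
  then show ?thesis using qH by simp
qed



lemma sf_interp:
  assumes "finite X" "degree P < card X"
  shows "seq_functional u P = (\<Sum>x\<in>X. poly P x * seq_functional u (lag X x))"
proof -
  have "seq_functional u P = seq_functional u (\<Sum>x\<in>X. Polynomial.smult (poly P x) (lag X x))"
    using interp[OF assms] by simp
  also have "\<dots> = (\<Sum>x\<in>X. poly P x * seq_functional u (lag X x))"
    by (simp add: sf_sum sf_smult)
  finally show ?thesis .
qed

lemma gauss:
  assumes len: "length u = 2*m" and m1: "m \<ge> 1" and ab: "a < b" and sp: "strictly_positive_on a b u"
  shows "\<exists>X w. rep u X w \<and> X \<subseteq> {a<..<b} \<and> card X = m \<and> (\<forall>x\<in>X. w x > 0) \<and>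
           X = {t. poly (qpoly u m) t = 0}"
proof -
  define q where "q = qpoly u m"
  have "coeff q m \<noteq> 0" using qpoly_lead[OF sp] len by (simp add: q_def coeff_qpoly)
  then have q0: "q \<noteq> 0" by auto
  have dq: "degree q \<le> m" by (simp add: q_def degree_qpoly)
  define R where "R = {z\<in>{a<..<b}. poly q z = 0 \<and> odd (order z q)}"
  have finR: "finite R" using poly_roots_finite[OF q0] by (rule finite_subset[rotated]) (auto simp: R_def)
  define r where "r = (\<Prod>z\<in>R. [:-z,1::real:])"
  have r0: "r \<noteq> 0" using finR by (auto simp: r_def prod_zero_iff)
  have dr: "degree r = card R" using finR by (simp add: r_def degree_linear_prod)
  define h where "h = r * q"
  have h0: "h \<noteq> 0" using r0 q0 by (simp add: h_def)
  have ev: "\<forall>y\<in>{a<..<b}. even (order y h)"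
  proof
    fix y assume y: "y \<in> {a<..<b}"
    have "order y h = order y r + order y q" using h0 by (simp add: h_def order_mult)
    moreover have "order y r = (if y \<in> R then 1 else 0)" using finR by (simp add: r_def order_linear_prod)
    moreover have "y \<notin> R \<Longrightarrow> even (order y q)"
      using y order_0I[of q y] by (auto simp: R_def)
    moreover have "y \<in> R \<Longrightarrow> odd (order y q)" by (simp add: R_def)
    ultimately show "even (order y h)" by (cases "y \<in> R") auto
  qed
  have cardR: "card R \<ge> m"
  proof (rule ccontr)
    assume "\<not> card R \<ge> m"
    then have "degree r < m" using dr by simp
    then have sf0: "seq_functional u h = 0" using orth[of r m u] len by (simp add: h_def q_def)
    have dh: "degree h < length u"
      using \<open>degree r < m\<close> dq degree_mult_le[of r q] len by (simp add: h_def)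
    from ns_lemma[OF h0 ev] show False
    proof
      assume "\<forall>x\<in>{a<..<b}. poly h x \<ge> 0"
      then have "\<forall>x\<in>{a..b}. poly h x \<ge> 0" using nonneg_closure ab by blast
      then have "seq_functional u h > 0" using sp dh h0 unfolding strictly_positive_on_def by blast
      then show False using sf0 by simp
    next
      assume "\<forall>x\<in>{a<..<b}. poly h x \<le> 0"
      then have "\<forall>x\<in>{a<..<b}. poly (-h) x \<ge> 0" by simp
      then have "\<forall>x\<in>{a..b}. poly (-h) x \<ge> 0" using nonneg_closure ab by blast
      then have "seq_functional u (-h) > 0" using sp dh h0 unfolding strictly_positive_on_def by auto
      then show False using sf0 by (simp add: sf_minus)
    qed
  qed
  have rootsfin: "finite {t. poly q t = 0}" using poly_roots_finite[OF q0] .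
  have Rsub: "R \<subseteq> {t. poly q t = 0}" by (auto simp: R_def)
  have cr: "card {t. poly q t = 0} \<le> degree q" using card_poly_roots_bound[OF q0] .
  have "card R \<le> card {t. poly q t = 0}" using card_mono[OF rootsfin Rsub] .
  then have cardRm: "card R = m" and dqm: "degree q = m" using cardR cr dq by linarith+
  have Req: "R = {t. poly q t = 0}"
    using card_subset_eq[OF rootsfin Rsub] cardRm cr dq cardR \<open>card R \<le> _\<close> by linarith
  define w where "w x = seq_functional u (lag R x)" for x
  have repR: "rep u R w"
    unfolding rep_def
  proof (intro conjI allI impI)
    show "finite R" by fact
    fix P :: "real poly" assume dP: "degree P < length u"
    have dm: "P div q * q + P mod q = P" by (rule div_mult_mod_eq)
    have dmod: "degree (P mod q) < m"
      using degree_mod_less[OF q0, of P] dqm m1 by auto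
    have ddiv: "degree (P div q) < m"
    proof (cases "P div q = 0")
      case True then show ?thesis using m1 by simp
    next
      case False
      have "degree (P div q * q) = degree (P div q) + m" using False q0 dqm by (simp add: degree_mult_eq)
      moreover have "P div q * q = P - P mod q" using dm by (simp add: algebra_simps)
      moreover have "degree (P - P mod q) < 2 * m"
      proof -
        have "degree P \<le> 2*m-1" "degree (P mod q) \<le> 2*m-1" using dP dmod len by linarith+
        from degree_diff_le[OF this] show ?thesis using m1 by linarith
      qed
      ultimately show ?thesis by simp
    qed
    have "seq_functional u P = seq_functional u (P div q * q) + seq_functional u (P mod q)"
      using dm sf_add by metis
    also have "seq_functional u (P div q * q) = 0" using orth[OF ddiv, of u] len by (simp add: q_def)
    also have "seq_functional u (P mod q) = (\<Sum>x\<in>R. poly (P mod q) x * w x)"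
      unfolding w_def using sf_interp[OF finR, where P="P mod q" and u=u] dmod cardRm by simp
    also have "\<dots> = (\<Sum>x\<in>R. w x * poly P x)"
    proof (rule sum.cong[OF refl])
      fix x assume "x \<in> R"
      then have "poly q x = 0" using Req by auto
      then have "poly P x = poly (P mod q) x" by (simp add: poly_mod)
      then show "poly (P mod q) x * w x = w x * poly P x" by simp
    qed
    finally show "seq_functional u P = (\<Sum>x\<in>R. w x * poly P x)" by simp
  qed
  have wpos: "\<forall>x\<in>R. w x > 0"
  proof
    fix x assume x: "x \<in> R"
    define l where "l = lag R x"
    have lx: "poly l x = 1" using poly_lag[OF finR x x] by (simp add: l_def)
    then have l0: "l \<noteq> 0" by auto
    have dl: "degree l \<le> m - 1" using degree_lag[OF finR x] cardRm by (simp add: l_def)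
    have dll: "degree (l * l) < length u" using dl degree_mult_le[of l l] len m1 by linarith
    have "seq_functional u (l * l) = (\<Sum>y\<in>R. w y * poly (l * l) y)"
      using repR dll unfolding rep_def by blast
    also have "\<dots> = (\<Sum>y\<in>R. if y = x then w y else 0)"
      by (rule sum.cong[OF refl]) (use finR x in \<open>auto simp: l_def poly_lag\<close>)
    also have "\<dots> = w x" using x finR by simp
    finally have eq: "seq_functional u (l * l) = w x" .
    have "seq_functional u (l * l) > 0"
      using sp dll l0 unfolding strictly_positive_on_def by auto
    then show "w x > 0" using eq by simp
  qed
  have Rab: "R \<subseteq> {a<..<b}" unfolding R_def by blast
  have Req': "R = {t. poly (qpoly u m) t = 0}" using Req by (simp add: q_def)
  show ?thesis using repR Rab cardRm wpos Req' by blast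
qed



lemma prod_sign:
  fixes f :: "real \<Rightarrow> real"
  assumes "finite A" "\<forall>y\<in>A. f y \<noteq> 0"
  shows "(\<Prod>y\<in>A. f y) = (-1) ^ card {y\<in>A. f y < 0} * (\<Prod>y\<in>A. \<bar>f y\<bar>)"
  using assms
proof (induction A rule: finite_induct)
  case empty then show ?case by simp
next
  case (insert a A)
  have fin: "finite {y\<in>A. f y < 0}" using insert by auto
  have IH: "prod f A = (-1)^card {y\<in>A. f y < 0} * (\<Prod>y\<in>A. \<bar>f y\<bar>)" using insert by simp
  have pi: "prod f (insert a A) = f a * prod f A" "(\<Prod>y\<in>insert a A. \<bar>f y\<bar>) = \<bar>f a\<bar> * (\<Prod>y\<in>A. \<bar>f y\<bar>)"
    using insert.hyps by simp_all
  show ?case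
  proof (cases "f a < 0")
    case True
    then have "{y\<in>insert a A. f y < 0} = insert a {y\<in>A. f y < 0}" by auto
    moreover have "a \<notin> {y\<in>A. f y < 0}" using insert by auto
    ultimately have c: "card {y\<in>insert a A. f y < 0} = Suc (card {y\<in>A. f y < 0})" using fin by simp
    show ?thesis unfolding c pi IH using True by (simp add: abs_of_neg)
  next
    case False
    then have "f a > 0" using insert by (simp add: less_le)
    have c: "{y\<in>insert a A. f y < 0} = {y\<in>A. f y < 0}" using False by auto
    show ?thesis unfolding c pi IH using \<open>f a > 0\<close> by (simp add: mult_ac)
  qed
qed

lemma lag_at0:
  assumes "finite S" "z \<in> S"
  shows "poly (lag S z) 0 = (\<Prod>y\<in>S-{z}. y / (y - z))"
proof -
  have "poly (lag S z) 0 = (\<Prod>y\<in>S-{z}. (0 - y)) / (\<Prod>y\<in>S-{z}. (z - y))"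
    by (simp add: lag_def poly_prod)
  also have "\<dots> = (\<Prod>y\<in>S-{z}. (0 - y) / (z - y))" by (rule prod_dividef[symmetric])
  also have "\<dots> = (\<Prod>y\<in>S-{z}. y / (y - z))"
    by (rule prod.cong[OF refl]) (simp add: field_simps)
  finally show ?thesis .
qed

lemma lag_at0_sign:
  assumes "finite S" "z \<in> S" "S \<subseteq> {0<..}"
  shows "poly (lag S z) 0 = (-1) ^ card {y\<in>S. y < z} * \<bar>poly (lag S z) 0\<bar>"
proof -
  have nz: "\<forall>y\<in>S-{z}. y / (y - z) \<noteq> 0" using assms by auto
  have "{y\<in>S-{z}. y / (y - z) < 0} = {y\<in>S. y < z}"
    using assms by (auto simp: divide_less_0_iff)
  then have "poly (lag S z) 0 = (-1) ^ card {y\<in>S. y < z} * (\<Prod>y\<in>S-{z}. \<bar>y / (y - z)\<bar>)"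
    using prod_sign[of "S-{z}" "\<lambda>y. y / (y - z)"] assms nz by (simp add: lag_at0)
  moreover have "\<bar>poly (lag S z) 0\<bar> = (\<Prod>y\<in>S-{z}. \<bar>y / (y - z)\<bar>)"
    using assms by (simp add: lag_at0 abs_prod)
  ultimately show ?thesis by simp
qed

lemma lag_at0_nz:
  assumes "finite S" "z \<in> S" "S \<subseteq> {0<..}"
  shows "poly (lag S z) 0 \<noteq> 0"
  using assms by (auto simp: lag_at0 prod_zero_iff)

definition pf :: "(nat \<Rightarrow> real) \<Rightarrow> nat \<Rightarrow> nat \<Rightarrow> real" where
  "pf x k j = (if odd j then x ((j-1) div 2) else if j < 2*k then (x (j div 2 - 1) + x (j div 2))/2 else x (k-1) + 1)"

definition pe :: "(nat \<Rightarrow> real) \<Rightarrow> nat \<Rightarrow> real \<Rightarrow> nat \<Rightarrow> real" where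
  "pe x k \<epsilon> j = (if j = 0 then \<epsilon> else pf x k j)"

lemma pe_step:
  assumes xm: "\<forall>i j. i < j \<longrightarrow> j < k \<longrightarrow> x i < x j" and e: "\<epsilon> < x 0" and j: "j < 2*k"
  shows "pe x k \<epsilon> j < pe x k \<epsilon> (Suc j)"
proof (cases "j = 0")
  case True then show ?thesis using e by (simp add: pe_def pf_def)
next
  case False
  show ?thesis
  proof (cases "odd j")
    case True
    then obtain i where i: "j = 2*i+1" by (metis oddE)
    show ?thesis
    proof (cases "Suc j < 2*k")
      case True
      then have "x i < x (Suc i)" using xm i by auto
      then show ?thesis using i True by (simp add: pe_def pf_def)
    next
      case False
      then have "i = k - 1" using i j by auto
      then show ?thesis using i False by (simp add: pe_def pf_def)
    qed
  next
    case ev: False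
    then obtain i where i: "j = 2*i" by (metis evenE)
    then have "i \<ge> 1" "i < k" using \<open>j \<noteq> 0\<close> j by auto
    then have "x (i - 1) < x i" using xm by auto
    then show ?thesis using i \<open>j \<noteq> 0\<close> j \<open>i \<ge> 1\<close> by (simp add: pe_def pf_def)
  qed
qed

lemma pe_mono:
  assumes xm: "\<forall>i j. i < j \<longrightarrow> j < k \<longrightarrow> x i < x j" and e: "\<epsilon> < x 0"
  shows "i < j \<Longrightarrow> j \<le> 2*k \<Longrightarrow> pe x k \<epsilon> i < pe x k \<epsilon> j"
proof (induction j)
  case 0 then show ?case by simp
next
  case (Suc j)
  have st: "pe x k \<epsilon> j < pe x k \<epsilon> (Suc j)" using pe_step[OF xm e] Suc by simp
  show ?case
  proof (cases "i = j")
    case True then show ?thesis using st by simp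
  next
    case False then show ?thesis using Suc st by auto
  qed
qed



lemma card_even_less: "2 * card {j\<in>{..<N}. even j} \<ge> (N::nat)"
proof (induction N)
  case 0 then show ?case by simp
next
  case (Suc N)
  show ?case
  proof (cases "even N")
    case True
    then have "{j\<in>{..<Suc N}. even j} = insert N {j\<in>{..<N}. even j}" by auto
    then have "card {j\<in>{..<Suc N}. even j} = Suc (card {j\<in>{..<N}. even j})" by simp
    then show ?thesis using Suc by simp
  next
    case False
    then have e: "{j\<in>{..<Suc N}. even j} = {j\<in>{..<N}. even j}" by (auto simp: less_Suc_eq)
    have ev2: "even (2 * card {j\<in>{..<N}. even j})" by simp
    have "2 * card {j\<in>{..<N}. even j} \<noteq> N" using False ev2 by metis
    then show ?thesis using Suc e by simp
  qed
qed

lemma move: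
  assumes repu: "\<forall>P. degree P < length u \<longrightarrow> seq_functional u P = (\<Sum>x\<in>X. v x * poly P x) + \<delta> * poly P 0"
    and finX: "finite X" and Xpos: "X \<subseteq> {0<..}" and vpos: "\<forall>x\<in>X. v x > 0" and d: "\<delta> > 0"
    and k: "card X = k" "k \<ge> 1" and len: "2*k \<le> length u" "length u \<le> 2*k+1"
  shows "\<exists>\<alpha> \<beta>. 0 < \<alpha> \<and> \<alpha> < \<beta> \<and> strictly_positive_on \<alpha> \<beta> u"
proof -
  obtain xs where xs: "sorted_wrt (<) xs" "set xs = X" using finite_set_strict_sorted[OF finX] by blast
  have dxs: "distinct xs" using xs by (simp add: strict_sorted_iff)
  have lxs: "length xs = k" using distinct_card[OF dxs] xs k by simp
  define x where "x i = xs ! i" for i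
  have xm: "\<forall>i j. i < j \<longrightarrow> j < k \<longrightarrow> x i < x j"
    using sorted_wrt_nth_less[OF xs(1)] lxs by (auto simp: x_def)
  have Xx: "X = x ` {..<k}" using xs lxs by (auto simp: x_def set_conv_nth)
  have "x 0 \<in> X" using Xx k by auto
  then have x0: "x 0 > 0" using Xpos by auto
  define N where "N = length u"
  define F where "F = pf x k ` {1..<N}"
  define C where "C z = (\<Prod>y\<in>F-{z}. y / (y - z))" for z
  have ev1: "\<forall>z\<in>X. eventually (\<lambda>\<epsilon>. \<bar>\<delta> * (\<epsilon> / (\<epsilon> - z)) * C z\<bar> < v z) (at_right 0)"
  proof
    fix z assume z: "z \<in> X"
    then have "z > 0" using Xpos by auto
    have "((\<lambda>\<epsilon>. \<delta> * (\<epsilon> / (\<epsilon> - z)) * C z) \<longlongrightarrow> \<delta> * (0 / (0 - z)) * C z) (at_right 0)"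
      using \<open>z > 0\<close> by (intro tendsto_intros) auto
    then have lim: "((\<lambda>\<epsilon>. \<delta> * (\<epsilon> / (\<epsilon> - z)) * C z) \<longlongrightarrow> 0) (at_right 0)" by simp
    have "eventually (\<lambda>\<epsilon>. \<delta> * (\<epsilon> / (\<epsilon> - z)) * C z < v z) (at_right 0)"
      using order_tendstoD(2)[OF lim] vpos z by auto
    moreover have "eventually (\<lambda>\<epsilon>. \<delta> * (\<epsilon> / (\<epsilon> - z)) * C z > - v z) (at_right 0)"
      using order_tendstoD(1)[OF lim] vpos z by auto
    ultimately show "eventually (\<lambda>\<epsilon>. \<bar>\<delta> * (\<epsilon> / (\<epsilon> - z)) * C z\<bar> < v z) (at_right 0)"
      by eventually_elim linarith
  qed
  have e1: "eventually (\<lambda>\<epsilon>. \<forall>z\<in>X. \<bar>\<delta> * (\<epsilon> / (\<epsilon> - z)) * C z\<bar> < v z) (at_right 0)"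
    using eventually_ball_finite[OF finX ev1] .
  have e2: "eventually (\<lambda>\<epsilon>. 0 < \<epsilon>) (at_right (0::real))" by (rule eventually_at_right_less)
  have e3: "eventually (\<lambda>\<epsilon>. \<epsilon> < x 0) (at_right (0::real))"
    using order_tendstoD(2)[OF tendsto_ident_at[of "0::real" "{0<..}"] x0] by simp
  have evall: "eventually (\<lambda>\<epsilon>. (\<forall>z\<in>X. \<bar>\<delta> * (\<epsilon> / (\<epsilon> - z)) * C z\<bar> < v z) \<and> 0 < \<epsilon> \<and> \<epsilon> < x 0) (at_right 0)"
    using e1 e2 e3 by eventually_elim blast
  have nb: "at_right (0::real) \<noteq> bot" by simp
  obtain \<epsilon> where eps: "\<forall>z\<in>X. \<bar>\<delta> * (\<epsilon> / (\<epsilon> - z)) * C z\<bar> < v z" "0 < \<epsilon>" "\<epsilon> < x 0"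
    using eventually_happens'[OF nb evall] by blast
  define p where "p = pe x k \<epsilon>"
  have mono: "i < j \<Longrightarrow> j < N \<Longrightarrow> p i < p j" for i j
    using pe_mono[OF xm eps(3)] len by (simp add: p_def N_def)
  have inj: "inj_on p {..<N}"
  proof (rule inj_onI)
    fix i j assume "i \<in> {..<N}" "j \<in> {..<N}" "p i = p j"
    then show "i = j" using mono[of i j] mono[of j i] by (metis lessThan_iff linorder_neqE_nat order_less_irrefl)
  qed
  define S where "S = p ` {..<N}"
  have finS: "finite S" by (simp add: S_def)
  have cardS: "card S = N" using inj by (simp add: S_def card_image)
  have N0: "N > 0" using len k unfolding N_def by linarith
  have pge: "j < N \<Longrightarrow> p j \<ge> \<epsilon>" for j
    using mono[of 0 j] by (cases "j = 0") (auto simp: p_def pe_def)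
  have Spos: "S \<subseteq> {0<..}" using pge eps by (force simp: S_def)
  have podd: "i < k \<Longrightarrow> p (2*i+1) = x i" for i by (simp add: p_def pe_def pf_def)
  have XS: "X \<subseteq> S"
  proof
    fix z assume "z \<in> X"
    then obtain i where i: "i < k" "z = x i" using Xx by auto
    then have "2*i+1 < N" using len by (simp add: N_def)
    then show "z \<in> S" using podd i by (force simp: S_def)
  qed
  have inX: "j < N \<Longrightarrow> p j \<in> X \<longleftrightarrow> odd j" for j
  proof
    assume j: "j < N" and "p j \<in> X"
    then obtain i where i: "i < k" "p j = x i" using Xx by auto
    then have "p j = p (2*i+1)" using podd by simp
    moreover have "2*i+1 < N" using i len by (simp add: N_def)
    ultimately have "j = 2*i+1" using inj j by (auto dest: inj_onD)
    then show "odd j" by simp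
  next
    assume j: "j < N" and "odd j"
    then obtain i where i: "j = 2*i+1" by (metis oddE)
    then have "i < k" using j len by (simp add: N_def)
    then show "p j \<in> X" using podd i Xx by auto
  qed
  have below: "j < N \<Longrightarrow> card {y\<in>S. y < p j} = j" for j
  proof -
    assume j: "j < N"
    have "{y\<in>S. y < p j} = p ` {..<j}"
    proof
      show "{y\<in>S. y < p j} \<subseteq> p ` {..<j}"
      proof
        fix y assume "y \<in> {y\<in>S. y < p j}"
        then obtain i where i: "i < N" "y = p i" "p i < p j" by (auto simp: S_def)
        then have "i < j" using mono[of j i] j by (metis linorder_neqE_nat order_less_asym)
        then show "y \<in> p ` {..<j}" using i by auto
      qed
      show "p ` {..<j} \<subseteq> {y\<in>S. y < p j}" using mono j by (auto simp: S_def)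
    qed
    moreover have "inj_on p {..<j}" using j by (intro inj_on_subset[OF inj]) auto
    ultimately show ?thesis by (simp add: card_image)
  qed
  have sgn: "j < N \<Longrightarrow> poly (lag S (p j)) 0 = (-1)^j * \<bar>poly (lag S (p j)) 0\<bar>" for j
    using lag_at0_sign[OF finS _ Spos, of "p j"] below[of j] by (auto simp: S_def)
  have nzl: "j < N \<Longrightarrow> poly (lag S (p j)) 0 \<noteq> 0" for j
    using lag_at0_nz[OF finS _ Spos, of "p j"] by (auto simp: S_def)
  have SF: "S = insert \<epsilon> F"
  proof -
    have "{..<N} = insert 0 {1..<N}" using N0 by auto
    then have "S = insert (p 0) (p ` {1..<N})" by (simp add: S_def)
    moreover have "p ` {1..<N} = F" by (auto simp: F_def p_def pe_def)
    ultimately show ?thesis by (simp add: p_def pe_def)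
  qed
  have epsF: "\<epsilon> \<notin> F"
  proof
    assume "\<epsilon> \<in> F"
    then obtain j where "j \<in> {1..<N}" "\<epsilon> = p j" by (auto simp: F_def p_def pe_def)
    then show False using mono[of 0 j] by (auto simp: p_def pe_def)
  qed
  have lagX: "z \<in> X \<Longrightarrow> poly (lag S z) 0 = (\<epsilon> / (\<epsilon> - z)) * C z" for z
  proof -
    assume z: "z \<in> X"
    then obtain i where i: "i < k" "z = x i" using Xx by auto
    have "x 0 \<le> z"
    proof (cases "i = 0")
      case False then have "x 0 < x i" using xm i by blast
      then show ?thesis using i by simp
    qed (use i in simp)
    then have "z \<noteq> \<epsilon>" using eps(3) by auto
    have "S - {z} = insert \<epsilon> (F - {z})" using SF \<open>z \<noteq> \<epsilon>\<close> by auto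
    then have "poly (lag S z) 0 = (\<Prod>y\<in>insert \<epsilon> (F - {z}). y / (y - z))"
      using lag_at0[OF finS] XS z by auto
    also have "\<dots> = (\<epsilon> / (\<epsilon> - z)) * C z"
      using epsF by (simp add: C_def F_def)
    finally show ?thesis .
  qed
  define w where "w y = (if y \<in> X then v y else 0) + \<delta> * poly (lag S y) 0" for y
  have repS: "rep u S w"
    unfolding rep_def
  proof (intro conjI allI impI)
    show "finite S" by fact
    fix P :: "real poly" assume dP: "degree P < length u"
    have P0: "poly P 0 = (\<Sum>y\<in>S. poly P y * poly (lag S y) 0)"
      using interp_poly[OF finS, of P 0] dP cardS by (simp add: N_def)
    have "(\<Sum>y\<in>S. w y * poly P y) = (\<Sum>y\<in>S. (if y \<in> X then v y else 0) * poly P y) + \<delta> * (\<Sum>y\<in>S. poly P y * poly (lag S y) 0)"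
      by (simp add: w_def algebra_simps sum.distrib sum_distrib_left)
    also have "(\<Sum>y\<in>S. (if y \<in> X then v y else 0) * poly P y) = (\<Sum>y\<in>X. v y * poly P y)"
    proof -
      have "(\<Sum>y\<in>S. (if y \<in> X then v y else 0) * poly P y) = (\<Sum>y\<in>S. if y \<in> X then v y * poly P y else 0)"
        by (rule sum.cong) auto
      also have "\<dots> = (\<Sum>y\<in>S \<inter> X. v y * poly P y)" using finS by (simp add: sum.inter_restrict)
      also have "S \<inter> X = X" using XS by auto
      finally show ?thesis .
    qed
    finally show "seq_functional u P = (\<Sum>y\<in>S. w y * poly P y)"
      using repu dP P0 by simp
  qed
  define Z where "Z = p ` {j\<in>{..<N}. even j}"
  have wpos: "j < N \<Longrightarrow> w (p j) > 0" for j
  proof -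
    assume j: "j < N"
    show "w (p j) > 0"
    proof (cases "odd j")
      case True
      then have pX: "p j \<in> X" using inX j by simp
      have "\<bar>\<delta> * poly (lag S (p j)) 0\<bar> < v (p j)" using eps(1) pX lagX[OF pX] by (simp add: mult.assoc)
      then show ?thesis using pX by (simp add: w_def)
    next
      case False
      then have "p j \<notin> X" using inX j by simp
      have "(-1::real)^j = 1" using False by simp
      then have "poly (lag S (p j)) 0 = \<bar>poly (lag S (p j)) 0\<bar>" using sgn[OF j] by simp
      then have "poly (lag S (p j)) 0 > 0" using nzl[OF j] by (metis abs_ge_zero less_eq_real_def)
      then show ?thesis using \<open>p j \<notin> X\<close> d by (simp add: w_def)
    qed
  qed
  define \<beta> where "\<beta> = p (2*k) + 1"
  have ple: "j < N \<Longrightarrow> p j \<le> p (2*k)" for j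
    using pe_mono[OF xm eps(3), of j "2*k"] len by (cases "j = 2*k") (auto simp: p_def N_def)
  have "strictly_positive_on (\<epsilon>/2) \<beta> u"
  proof (rule mix_strict[OF repS, of _ _ Z])
    show "\<forall>x\<in>S. 0 \<le> w x" using wpos by (auto simp: S_def less_imp_le)
    show "S \<subseteq> {\<epsilon>/2..\<beta>}" using pge ple eps by (force simp: S_def \<beta>_def)
    show "Z \<subseteq> S" by (auto simp: Z_def S_def)
    show "Z \<subseteq> {\<epsilon>/2<..<\<beta>}" using pge ple eps by (force simp: Z_def \<beta>_def)
    show "\<forall>z\<in>Z. 0 < w z" using wpos by (auto simp: Z_def)
    have "inj_on p {j\<in>{..<N}. even j}" by (rule inj_on_subset[OF inj]) auto
    then have "card Z = card {j\<in>{..<N}. even j}" unfolding Z_def by (rule card_image)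
    then show "length u \<le> 2 * card Z" using card_even_less[of N] by (simp add: N_def)
  qed
  moreover have "\<epsilon>/2 < \<beta>" using pge[of 0] N0 ple[of 0] eps by (simp add: \<beta>_def)
  ultimately show ?thesis using eps by (intro exI[of _ "\<epsilon>/2"] exI[of _ \<beta>]) auto
qed



lemma positive_on_mono:
  "positive_on a b u \<Longrightarrow> A \<le> a \<Longrightarrow> b \<le> B \<Longrightarrow> positive_on A B u"
  unfolding positive_on_def by auto

lemma sf_const: assumes "s \<noteq> []" shows "seq_functional s [:c:] = c * s!0"
proof -
  obtain l where l: "length s = Suc l" using assms by (cases s) auto
  show ?thesis unfolding seq_functional_def l sum.lessThan_Suc_shift by simp
qed

lemma shift_rep:
  assumes "rep s X w" "X \<subseteq> {0<..}" "s \<noteq> []"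
  shows "\<forall>P. degree P < length (c # s) \<longrightarrow>
     seq_functional (c # s) P = (\<Sum>x\<in>X. (w x / x) * poly P x) + (c - (\<Sum>x\<in>X. w x / x)) * poly P 0"
proof (intro allI impI)
  fix P :: "real poly" assume dP: "degree P < length (c # s)"
  obtain a R where P: "P = pCons a R" by (cases P)
  have dR: "degree R < length s"
  proof (cases "R = 0")
    case True then show ?thesis using assms(3) by simp
  next
    case False then show ?thesis using dP P by simp
  qed
  have fin: "finite X" using assms by (simp add: rep_def)
  have "seq_functional (c # s) P = c * a + seq_functional s R" by (simp add: P sf_shift)
  also have "seq_functional s R = (\<Sum>x\<in>X. w x * poly R x)" using assms dR by (simp add: rep_def)
  also have "\<dots> = (\<Sum>x\<in>X. (w x / x) * poly P x - a * (w x / x))"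
  proof (rule sum.cong[OF refl])
    fix x assume "x \<in> X"
    then have "x > 0" using assms by auto
    then show "w x * poly R x = (w x / x) * poly P x - a * (w x / x)"
      by (simp add: P field_simps)
  qed
  also have "\<dots> = (\<Sum>x\<in>X. (w x / x) * poly P x) - a * (\<Sum>x\<in>X. w x / x)"
    by (simp add: sum_subtractf sum_distrib_left)
  finally show "seq_functional (c # s) P = (\<Sum>x\<in>X. (w x / x) * poly P x) + (c - (\<Sum>x\<in>X. w x / x)) * poly P 0"
    by (simp add: P algebra_simps)
qed

lemma sf_lin_b:
  assumes "length s = 2*m + 1" "degree g < 2*m"
  shows "seq_functional (map (\<lambda>j. b * s!j - s!(j+1)) [0..<2*m]) g = seq_functional s ([:b, -1:] * g)"
proof -
  have e: "[:b, -1:] * g = Polynomial.smult b g - pCons 0 g" by (simp add: algebra_simps)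
  have c2: "coeff g (2*m) = 0" using assms by (simp add: coeff_eq_0)
  have "seq_functional s (Polynomial.smult b g) = b * (\<Sum>j<2*m. coeff g j * s!j)"
    using assms c2 by (simp add: seq_functional_def sum_distrib_left mult_ac)
  moreover have "seq_functional s (pCons 0 g) = (\<Sum>j<2*m. coeff g j * s!(j+1))"
  proof -
    have "seq_functional s (pCons 0 g) = (\<Sum>j<Suc (2*m). coeff (pCons 0 g) j * s!j)"
      by (simp only: seq_functional_def assms(1) add_Suc_right add_0_right One_nat_def)
    also have "\<dots> = coeff (pCons 0 g) 0 * s!0 + (\<Sum>j<2*m. coeff (pCons 0 g) (Suc j) * s!(Suc j))"
      by (rule sum.lessThan_Suc_shift)
    also have "\<dots> = (\<Sum>j<2*m. coeff g j * s!(j+1))" by simp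
    finally show ?thesis .
  qed
  moreover have "seq_functional (map (\<lambda>j. b * s!j - s!(j+1)) [0..<2*m]) g
        = (\<Sum>j<2*m. coeff g j * (b * s!j - s!(j+1)))"
    unfolding seq_functional_def by simp
  moreover have "(\<Sum>j<2*m. coeff g j * (b * s!j - s!(j+1))) = b * (\<Sum>j<2*m. coeff g j * s!j) - (\<Sum>j<2*m. coeff g j * s!(j+1))"
    by (simp add: algebra_simps sum_subtractf sum_distrib_left)
  moreover have "seq_functional s ([:b, -1:] * g) = seq_functional s (Polynomial.smult b g) - seq_functional s (pCons 0 g)"
    unfolding e by (rule sf_diff)
  ultimately show ?thesis by linarith
qed

lemma radau:
  assumes len: "length s = 2*m + 1" and ab: "0 < a0" "a0 < b0" and b: "b0 \<le> b"
    and sp: "strictly_positive_on a0 b0 s"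
  shows "\<exists>Y v. rep s (insert b Y) v \<and> finite Y \<and> Y \<subseteq> {a0<..<b0} \<and> b \<notin> Y \<and> card Y = m \<and>
           (\<forall>x\<in>insert b Y. v x > 0)"
proof (cases "m = 0")
  case True
  have "seq_functional s 1 > 0"
    using sp len True unfolding strictly_positive_on_def by auto
  then have s0: "s!0 > 0" using len True by (simp add: seq_functional_def)
  have "rep s {b} (\<lambda>_. s!0)"
    unfolding rep_def
  proof (intro conjI allI impI)
    fix P :: "real poly" assume "degree P < length s"
    then have "degree P = 0" using len True by simp
    then obtain c where "P = [:c:]" by (metis degree_eq_zeroE)
    then show "seq_functional s P = (\<Sum>x\<in>{b}. s!0 * poly P x)"
      using len True by (simp add: seq_functional_def)
  qed simp
  then show ?thesis using True s0 by (intro exI[of _ "{}"] exI[of _ "\<lambda>_. s!0"]) auto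
next
  case False
  then have m1: "m \<ge> 1" by simp
  define ub where "ub = map (\<lambda>j. b * s!j - s!(j+1)) [0..<2*m]"
  have lub: "length ub = 2*m" by (simp add: ub_def)
  have key: "degree g < 2*m \<Longrightarrow> seq_functional ub g = seq_functional s ([:b, -1:] * g)" for g
    using sf_lin_b[OF len] by (simp add: ub_def)
  have nn: "\<forall>x\<in>{a0..b0}. poly g x \<ge> 0 \<Longrightarrow> \<forall>x\<in>{a0..b0}. poly ([:b, -1:] * g) x \<ge> 0" for g
  proof (intro ballI)
    fix x assume g: "\<forall>x\<in>{a0..b0}. poly g x \<ge> 0" and x: "x \<in> {a0..b0}"
    have "poly ([:b, -1:] * g) x = (b - x) * poly g x" by (simp add: algebra_simps)
    moreover have "b - x \<ge> 0" using x b by simp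
    moreover have "poly g x \<ge> 0" using g x by blast
    ultimately show "poly ([:b, -1:] * g) x \<ge> 0" by simp
  qed
  have dg: "degree g < 2*m \<Longrightarrow> degree ([:b, -1:] * g) < length s" for g
    using degree_mult_le[of "[:b, -1:]" g] len by (simp add: degree_pCons_le)
  have pos: "degree g < 2*m \<Longrightarrow> \<forall>x\<in>{a0..b0}. poly g x \<ge> 0 \<Longrightarrow> g \<noteq> 0 \<Longrightarrow> seq_functional ub g > 0" for g
  proof -
    assume g: "degree g < 2*m" "\<forall>x\<in>{a0..b0}. poly g x \<ge> 0" "g \<noteq> 0"
    have ne: "[:b, -1:] * g \<noteq> 0" using g(3) by (simp only: mult_eq_0_iff pCons_eq_0_iff, simp)
    have "seq_functional s ([:b, -1:] * g) > 0"
      using sp ne nn[OF g(2)] dg[OF g(1)] unfolding strictly_positive_on_def by blast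
    then show ?thesis using key[OF g(1)] by simp
  qed
  have spb: "strictly_positive_on a0 b0 ub"
    unfolding strictly_positive_on_def positive_on_def
  proof (intro conjI allI impI)
    fix g :: "real poly" assume g: "degree g < length ub \<and> (\<forall>x\<in>{a0..b0}. 0 \<le> poly g x)"
    show "seq_functional ub g \<ge> 0"
    proof (cases "g = 0")
      case True then show ?thesis by simp
    next
      case False
      then show ?thesis using pos g lub by (simp add: less_imp_le)
    qed
  next
    fix g :: "real poly" assume g: "degree g < length ub \<and> (\<forall>x\<in>{a0..b0}. 0 \<le> poly g x) \<and> g \<noteq> 0"
    then show "seq_functional ub g > 0" using pos lub by simp
  qed
  obtain Y \<rho> where Y: "rep ub Y \<rho>" "Y \<subseteq> {a0<..<b0}" "card Y = m" "\<forall>x\<in>Y. \<rho> x > 0"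
    using gauss[OF lub m1 ab(2) spb] by blast
  have finY: "finite Y" using Y by (simp add: rep_def)
  have bY: "b \<notin> Y" using Y b by auto
  define \<beta> where "\<beta> = s!0 - (\<Sum>y\<in>Y. \<rho> y / (b - y))"
  define v where "v z = (if z = b then \<beta> else \<rho> z / (b - z))" for z
  have repX: "rep s (insert b Y) v"
    unfolding rep_def
  proof (intro conjI allI impI)
    show "finite (insert b Y)" using finY by simp
    fix P :: "real poly" assume dP: "degree P < length s"
    define g where "g = synthetic_div P b"
    have Pg: "P = [:-b, 1:] * g + [:poly P b:]" using synthetic_div_correct'[of b P] by (simp add: g_def)
    have dgl: "degree g < 2*m" using dP len m1 by (simp add: g_def degree_synthetic_div)
    have mg: "[:-b, 1:] * g = - ([:b, -1:] * g)" by simp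
    have "seq_functional s ([:-b, 1:] * g) = - seq_functional s ([:b, -1:] * g)"
      unfolding mg by (rule sf_minus)
    also have "\<dots> = - seq_functional ub g" using key[OF dgl] by simp
    also have "seq_functional ub g = (\<Sum>y\<in>Y. \<rho> y * poly g y)"
      using Y dgl lub by (simp add: rep_def)
    finally have e1: "seq_functional s ([:-b, 1:] * g) = - (\<Sum>y\<in>Y. \<rho> y * poly g y)" .
    have gy: "y \<in> Y \<Longrightarrow> poly g y = (poly P y - poly P b) / (y - b)" for y
    proof -
      assume y: "y \<in> Y"
      then have yb: "y - b \<noteq> 0" using bY by auto
      have "poly P y = (y - b) * poly g y + poly P b"
        using arg_cong[OF Pg, of "\<lambda>p. poly p y"] by (simp add: algebra_simps)
      then show ?thesis using yb by (simp add: field_simps)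
    qed
    have e2: "seq_functional s [:poly P b:] = poly P b * s!0"
      using len by (intro sf_const) auto
    have "seq_functional s P = poly P b * s!0 - (\<Sum>y\<in>Y. \<rho> y * ((poly P y - poly P b) / (y - b)))"
      using e1 e2 gy by (subst Pg) (simp add: sf_add)
    also have "(\<Sum>y\<in>Y. \<rho> y * ((poly P y - poly P b) / (y - b))) = (\<Sum>y\<in>Y. \<rho> y / (b - y) * poly P b - v y * poly P y)"
    proof (rule sum.cong[OF refl])
      fix y assume "y \<in> Y"
      then have "y \<noteq> b" using bY by auto
      then have vy: "v y = \<rho> y / (b - y)" and yb: "y - b \<noteq> 0" "b - y \<noteq> 0" by (auto simp: v_def)
      have "\<rho> y * ((poly P y - poly P b) / (y - b)) = \<rho> y * ((poly P b - poly P y) / (b - y))"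
        using yb by (simp add: field_simps)
      then show "\<rho> y * ((poly P y - poly P b) / (y - b)) = \<rho> y / (b - y) * poly P b - v y * poly P y"
        unfolding vy by (simp add: diff_divide_distrib algebra_simps)
    qed
    also have "\<dots> = (\<Sum>y\<in>Y. \<rho> y / (b - y)) * poly P b - (\<Sum>y\<in>Y. v y * poly P y)"
      by (simp add: sum_subtractf sum_distrib_right)
    finally show "seq_functional s P = (\<Sum>x\<in>insert b Y. v x * poly P x)"
      using finY bY by (simp add: v_def \<beta>_def algebra_simps)
  qed
  have vY: "\<forall>y\<in>Y. v y > 0" using Y bY b by (auto simp: v_def)
  have "\<beta> > 0"
  proof -
    define r where "r = (\<Prod>y\<in>Y. [:-y, 1::real:])"
    have r0: "r \<noteq> 0" using finY by (auto simp: r_def prod_zero_iff)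
    have dr: "degree r = m" using Y finY by (simp add: r_def degree_linear_prod)
    have "degree (r * r) < length s" using dr len r0 by (simp add: degree_mult_eq)
    moreover have "r * r \<noteq> 0" using r0 by simp
    moreover have "\<forall>x\<in>{a0..b0}. poly (r * r) x \<ge> 0" by simp
    ultimately have pos: "seq_functional s (r * r) > 0" using sp unfolding strictly_positive_on_def by blast
    have ry: "y \<in> Y \<Longrightarrow> poly r y = 0" for y using finY by (auto simp: r_def poly_prod prod_zero_iff)
    have rb: "poly r b \<noteq> 0" using finY bY by (auto simp: r_def poly_prod prod_zero_iff)
    have "seq_functional s (r * r) = (\<Sum>x\<in>insert b Y. v x * poly (r * r) x)"
      using repX \<open>degree (r * r) < length s\<close> by (simp add: rep_def)
    also have "\<dots> = \<beta> * (poly r b)^2" using finY bY ry by (simp add: v_def power2_eq_square)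
    finally show ?thesis using pos rb by (metis zero_less_mult_pos2 zero_less_power2)
  qed
  then have "\<forall>x\<in>insert b Y. v x > 0" using vY by (simp add: v_def)
  then show ?thesis using repX finY Y bY by blast
qed



lemma qq_facts:
  fixes q :: "real poly"
  shows "poly (q * q) x \<ge> 0" by simp

lemma odd_case_c:
  assumes len: "length s = 2*m" and m1: "m \<ge> 1" and ab: "0 < a0" "a0 < b0"
    and G: "rep s X w" "X \<subseteq> {a0<..<b0}" "card X = m" "\<forall>x\<in>X. w x > 0" "X = {t. poly (qpoly s m) t = 0}"
    and q0: "qpoly s m \<noteq> 0"
  shows "(positive_on_pos_reals (c # s) \<and> \<not> strictly_positive_on_pos_reals (c # s)) \<longleftrightarrow> c = (\<Sum>x\<in>X. w x / x)"
proof -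
  define cs where "cs = (\<Sum>x\<in>X. w x / x)"
  define q where "q = qpoly s m"
  have finX: "finite X" using G by (simp add: rep_def)
  have Xpos: "X \<subseteq> {0<..}" using G ab by auto
  have sne: "s \<noteq> []" using len m1 by auto
  have F: "\<forall>P. degree P < length (c # s) \<longrightarrow>
     seq_functional (c # s) P = (\<Sum>x\<in>X. (w x / x) * poly P x) + (c - cs) * poly P 0"
    using shift_rep[OF G(1) Xpos sne] by (simp add: cs_def)
  have dq: "degree q \<le> m" by (simp add: q_def degree_qpoly)
  have dqq: "degree (q * q) < length (c # s)"
    using degree_mult_le[of q q] dq len by simp
  have qX: "x \<in> X \<Longrightarrow> poly q x = 0" for x using G by (simp add: q_def)
  have q00: "poly q 0 \<noteq> 0" using G ab by (auto simp: q_def)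
  have qq0: "q * q \<noteq> 0" using q0 by (simp add: q_def)
  have sfqq: "seq_functional (c # s) (q * q) = (c - cs) * (poly q 0)^2"
  proof -
    have "seq_functional (c # s) (q * q) = (\<Sum>x\<in>X. (w x / x) * poly (q * q) x) + (c - cs) * poly (q * q) 0"
      using F dqq by blast
    also have "(\<Sum>x\<in>X. (w x / x) * poly (q * q) x) = 0" using qX by simp
    finally show ?thesis by (simp add: power2_eq_square)
  qed
  have rep0: "rep (c # s) X (\<lambda>x. w x / x)" if "c = cs"
    unfolding rep_def using F finX that by simp
  have "(positive_on_pos_reals (c # s) \<and> \<not> strictly_positive_on_pos_reals (c # s)) \<longleftrightarrow> c = cs"
  proof
    assume I: "positive_on_pos_reals (c # s) \<and> \<not> strictly_positive_on_pos_reals (c # s)"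
    then obtain a1 b1 where ab1: "0 < a1" "a1 < b1" "positive_on a1 b1 (c # s)"
      unfolding positive_on_pos_reals_def by blast
    have "seq_functional (c # s) (q * q) \<ge> 0"
      using ab1(3) dqq unfolding positive_on_def by simp
    then have "(c - cs) * (poly q 0)^2 \<ge> 0" using sfqq by simp
    moreover have "(poly q 0)^2 > 0" using q00 by simp
    ultimately have ge: "c - cs \<ge> 0" by (simp add: zero_le_mult_iff)
    show "c = cs"
    proof (rule ccontr)
      assume "c \<noteq> cs"
      then have d: "c - cs > 0" using ge by simp
      have vpos: "\<forall>x\<in>X. w x / x > 0" using G(4) Xpos by auto
      have "\<exists>\<alpha> \<beta>. 0 < \<alpha> \<and> \<alpha> < \<beta> \<and> strictly_positive_on \<alpha> \<beta> (c # s)"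
        by (rule move[OF F finX Xpos vpos d G(3) m1]) (use len in auto)
      then show False using I unfolding strictly_positive_on_pos_reals_def by blast
    qed
  next
    assume c: "c = cs"
    have vpos': "\<forall>x\<in>X. w x / x \<ge> 0" using G(4) Xpos by (auto intro!: divide_nonneg_pos less_imp_le)
    have "positive_on a0 b0 (c # s)"
      by (rule mix_pos[OF rep0[OF c]]) (use vpos' G(2) in auto)
    then have P: "positive_on_pos_reals (c # s)" unfolding positive_on_pos_reals_def using ab by blast
    have "\<not> strictly_positive_on \<alpha> \<beta> (c # s)" for \<alpha> \<beta>
    proof
      assume "strictly_positive_on \<alpha> \<beta> (c # s)"
      then have "seq_functional (c # s) (q * q) > 0"
        using dqq qq0 unfolding strictly_positive_on_def by simp
      then show False using sfqq c by simp
    qed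
    then show "positive_on_pos_reals (c # s) \<and> \<not> strictly_positive_on_pos_reals (c # s)"
      using P unfolding strictly_positive_on_pos_reals_def by blast
  qed
  then show ?thesis by (simp add: cs_def)
qed

lemma even_case_false:
  assumes len: "length s = 2*m+1" and ab: "0 < a0" "a0 < b0" and sp: "strictly_positive_on a0 b0 s"
    and P: "positive_on_pos_reals (c # s)" and NS: "\<not> strictly_positive_on_pos_reals (c # s)"
  shows False
proof -
  obtain a1 b1 where ab1: "0 < a1" "a1 < b1" "positive_on a1 b1 (c # s)"
    using P unfolding positive_on_pos_reals_def by blast
  define b where "b = max b0 b1"
  obtain Y v where R: "rep s (insert b Y) v" "finite Y" "Y \<subseteq> {a0<..<b0}" "b \<notin> Y" "card Y = m"
      "\<forall>x\<in>insert b Y. v x > 0"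
    using radau[OF len ab _ sp, of b] by (auto simp: b_def)
  define X where "X = insert b Y"
  have finX: "finite X" using R by (simp add: X_def)
  have cX: "card X = m + 1" using R by (simp add: X_def)
  have bpos: "b > 0" using ab by (simp add: b_def)
  have Xpos: "X \<subseteq> {0<..}" using R ab bpos by (auto simp: X_def)
  have sne: "s \<noteq> []" using len by auto
  define \<delta> where "\<delta> = c - (\<Sum>x\<in>X. v x / x)"
  have F: "\<forall>P. degree P < length (c # s) \<longrightarrow>
     seq_functional (c # s) P = (\<Sum>x\<in>X. (v x / x) * poly P x) + \<delta> * poly P 0"
    using shift_rep[OF R(1)[folded X_def] Xpos sne] by (simp add: \<delta>_def)
  define A where "A = min a0 a1"
  have posA: "positive_on A b (c # s)"
    using positive_on_mono[OF ab1(3)] by (simp add: A_def b_def)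
  define r where "r = (\<Prod>y\<in>Y. [:-y, 1::real:])"
  have r0: "r \<noteq> 0" using R by (auto simp: r_def prod_zero_iff)
  have dr: "degree r = m" using R by (simp add: r_def degree_linear_prod)
  define Pp where "Pp = r * r * [:b, -1:]"
  have dP: "degree Pp < length (c # s)"
  proof -
    have "degree Pp \<le> degree (r * r) + degree [:b, -1::real:]" unfolding Pp_def by (rule degree_mult_le)
    also have "\<dots> \<le> m + m + 1" using degree_mult_le[of r r] dr by simp
    finally show ?thesis using len by simp
  qed
  have Pnn: "\<forall>x\<in>{A..b}. poly Pp x \<ge> 0"
  proof
    fix x assume x: "x \<in> {A..b}"
    have "poly Pp x = (poly r x)^2 * (b - x)" by (simp add: Pp_def power2_eq_square algebra_simps)
    moreover have "b - x \<ge> 0" using x by simp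
    ultimately show "poly Pp x \<ge> 0" by simp
  qed
  have PX: "x \<in> X \<Longrightarrow> poly Pp x = 0" for x
    using R by (auto simp: X_def Pp_def r_def poly_prod prod_zero_iff)
  have r00: "poly r 0 \<noteq> 0" using R ab by (auto simp: r_def poly_prod prod_zero_iff)
  have "poly Pp 0 = b * (poly r 0)^2" by (simp add: Pp_def power2_eq_square)
  then have P0: "poly Pp 0 > 0" using r00 bpos by simp
  have "seq_functional (c # s) Pp = \<delta> * poly Pp 0"
    using F dP PX by simp
  moreover have "seq_functional (c # s) Pp \<ge> 0" using posA dP Pnn unfolding positive_on_def by blast
  ultimately have "\<delta> * poly Pp 0 \<ge> 0" by simp
  then have dge: "\<delta> \<ge> 0" using P0 by (simp add: zero_le_mult_iff)
  have vpos: "\<forall>x\<in>X. v x / x > 0" using R Xpos by (auto simp: X_def)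
  have "\<exists>\<alpha> \<beta>. 0 < \<alpha> \<and> \<alpha> < \<beta> \<and> strictly_positive_on \<alpha> \<beta> (c # s)"
  proof (cases "\<delta> = 0")
    case True
    have rep0: "rep (c # s) X (\<lambda>x. v x / x)" unfolding rep_def using F finX True by simp
    have bb: "b0 \<le> b" by (simp add: b_def)
    have XI: "X \<subseteq> {a0/2<..<b+1}"
    proof
      fix x assume "x \<in> X"
      then consider "x = b" | "x \<in> Y" by (auto simp: X_def)
      then show "x \<in> {a0/2<..<b+1}"
      proof cases
        case 1 then show ?thesis using ab bb by simp
      next
        case 2 then have "a0 < x" "x < b0" using R(3) by auto
        then show ?thesis using ab bb by simp
      qed
    qed
    have "strictly_positive_on (a0/2) (b+1) (c # s)"
      by (rule mix_strict[OF rep0, of _ _ X]) (use vpos XI cX len in \<open>auto simp: less_imp_le\<close>)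
    moreover have "0 < a0/2" "a0/2 < b+1" using ab bb by auto
    ultimately show ?thesis by blast
  next
    case False
    then have d: "\<delta> > 0" using dge by simp
    show ?thesis by (rule move[OF F finX Xpos vpos d cX]) (use len in auto)
  qed
  then show False using NS unfolding strictly_positive_on_pos_reals_def by blast
qed



definition pmeas :: "real set \<Rightarrow> (real \<Rightarrow> real) \<Rightarrow> real measure" where
  "pmeas Z w = distr (point_measure Z (\<lambda>z. ennreal (w z))) borel (\<lambda>x. x)"

lemma pmeas_sets[simp]: "sets (pmeas Z w) = sets borel"
  by (simp add: pmeas_def)

lemma pmeas_space[simp]: "space (pmeas Z w) = UNIV"
  by (simp add: pmeas_def)

lemma pmeas_meas: "(\<lambda>x. x) \<in> measurable (point_measure Z (\<lambda>z. ennreal (w z))) borel"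
  by simp

lemma pmeas_emeasure:
  assumes "finite Z" "A \<in> sets borel"
  shows "emeasure (pmeas Z w) A = (\<Sum>z\<in>A \<inter> Z. ennreal (w z))"
proof -
  have "emeasure (pmeas Z w) A = emeasure (point_measure Z (\<lambda>z. ennreal (w z))) ((\<lambda>x. x) -` A \<inter> space (point_measure Z (\<lambda>z. ennreal (w z))))"
    unfolding pmeas_def by (rule emeasure_distr[OF pmeas_meas assms(2)])
  also have "\<dots> = emeasure (point_measure Z (\<lambda>z. ennreal (w z))) (A \<inter> Z)"
    by (simp add: space_point_measure)
  also have "\<dots> = (\<Sum>z\<in>A \<inter> Z. ennreal (w z))"
    using assms by (intro emeasure_point_measure_finite) auto
  finally show ?thesis .
qed

lemma pmeas_finite:
  assumes "finite Z" "\<forall>z\<in>Z. w z \<ge> 0"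
  shows "finite_measure (pmeas Z w)"
proof
  have "emeasure (pmeas Z w) (space (pmeas Z w)) = (\<Sum>z\<in>Z. ennreal (w z))"
    using pmeas_emeasure[OF assms(1), of UNIV w] by simp
  also have "\<dots> = ennreal (sum w Z)" using assms by (intro sum_ennreal) auto
  finally show "emeasure (pmeas Z w) (space (pmeas Z w)) \<noteq> \<infinity>" by simp
qed

lemma pmeas_integral:
  fixes f :: "real \<Rightarrow> real"
  assumes "finite Z" "\<forall>z\<in>Z. w z \<ge> 0" "f \<in> borel_measurable borel"
  shows "integrable (pmeas Z w) f" "(\<integral>x. f x \<partial>pmeas Z w) = (\<Sum>z\<in>Z. w z * f z)"
proof -
  show "integrable (pmeas Z w) f"
    unfolding pmeas_def
    by (subst integrable_distr_eq[OF pmeas_meas assms(3)]) (rule integrable_point_measure_finite[OF assms(1)])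
  have "(\<integral>x. f x \<partial>pmeas Z w) = (\<integral>x. f x \<partial>point_measure Z (\<lambda>z. ennreal (w z)))"
    unfolding pmeas_def by (rule integral_distr[OF pmeas_meas assms(3)])
  also have "\<dots> = (\<Sum>z\<in>Z. w z *\<^sub>R f z)"
    using assms by (intro lebesgue_integral_point_measure_finite) auto
  finally show "(\<integral>x. f x \<partial>pmeas Z w) = (\<Sum>z\<in>Z. w z * f z)" by simp
qed

lemma pmeas_moment:
  assumes "rep u Z w" "Z \<subseteq> {a..b}" "\<forall>z\<in>Z. w z \<ge> 0"
  shows "pmeas Z w \<in> moment_measures a b u"
proof -
  have fin: "finite Z" using assms by (simp add: rep_def)
  have "emeasure (pmeas Z w) (UNIV - {a..b}) = (\<Sum>z\<in>(UNIV - {a..b}) \<inter> Z. ennreal (w z))"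
    using fin by (intro pmeas_emeasure) auto
  also have "(UNIV - {a..b}) \<inter> Z = {}" using assms(2) by blast
  finally have e0: "emeasure (pmeas Z w) (UNIV - {a..b}) = 0" by simp
  have mom: "integrable (pmeas Z w) (\<lambda>x. x ^ j) \<and> (\<integral>x. x ^ j \<partial>pmeas Z w) = u ! j" if j: "j < length u" for j
  proof
    have meas: "(\<lambda>x::real. x ^ j) \<in> borel_measurable borel" by measurable
    show "integrable (pmeas Z w) (\<lambda>x. x ^ j)" by (rule pmeas_integral(1)[OF fin assms(3) meas])
    have "(\<integral>x. x ^ j \<partial>pmeas Z w) = (\<Sum>z\<in>Z. w z * z ^ j)" by (rule pmeas_integral(2)[OF fin assms(3) meas])
    also have "\<dots> = seq_functional u (monom 1 j)"
      using assms(1) j by (simp add: rep_def degree_monom_eq poly_monom)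
    also have "\<dots> = u ! j" using j by (simp add: sf_monom)
    finally show "(\<integral>x. x ^ j \<partial>pmeas Z w) = u ! j" .
  qed
  show ?thesis unfolding moment_measures_def
    using pmeas_finite[OF fin assms(3)] e0 mom by auto
qed

lemma mm_basic:
  assumes "M \<in> moment_measures a b u"
  shows "sets M = sets borel" "finite_measure M" "space M = UNIV" "AE x in M. x \<in> {a..b}"
proof -
  show s: "sets M = sets borel" "finite_measure M" using assms by (auto simp: moment_measures_def)
  show sp: "space M = UNIV" using sets_eq_imp_space_eq[OF s(1)] by simp
  have "UNIV - {a..b} \<in> null_sets M"
    using assms s(1) by (intro null_setsI) (auto simp: moment_measures_def)
  then show "AE x in M. x \<in> {a..b}" by (rule AE_I') (auto simp: sp)
qed

lemma mm_poly:
  assumes M: "M \<in> moment_measures a b u" and dP: "degree P < length u"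
  shows "integrable M (\<lambda>x. poly P x)" "(\<integral>x. poly P x \<partial>M) = seq_functional u P"
proof -
  have mom: "\<And>j. j < length u \<Longrightarrow> integrable M (\<lambda>x. x ^ j) \<and> (\<integral>x. x ^ j \<partial>M) = u ! j"
    using M by (auto simp: moment_measures_def)
  have pe: "(\<lambda>x. poly P x) = (\<lambda>x. \<Sum>i\<le>degree P. coeff P i * x ^ i)" by (simp add: poly_altdef)
  have int: "i \<in> {..degree P} \<Longrightarrow> integrable M (\<lambda>x. coeff P i * x ^ i)" for i
    using mom[of i] dP by auto
  show "integrable M (\<lambda>x. poly P x)" unfolding pe by (rule Bochner_Integration.integrable_sum, rule int)
  have "(\<integral>x. poly P x \<partial>M) = (\<Sum>i\<le>degree P. (\<integral>x. coeff P i * x ^ i \<partial>M))"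
    unfolding pe by (rule Bochner_Integration.integral_sum) (use int in auto)
  also have "\<dots> = (\<Sum>i\<le>degree P. coeff P i * u ! i)"
    by (rule sum.cong[OF refl]) (use mom dP in auto)
  also have "\<dots> = (\<Sum>i<length u. coeff P i * u ! i)"
    by (rule sum.mono_neutral_left) (use dP in \<open>auto simp: coeff_eq_0\<close>)
  finally show "(\<integral>x. poly P x \<partial>M) = seq_functional u P" by (simp add: seq_functional_def)
qed



lemma tinf:
  assumes len: "length s = 2*m" and m1: "m \<ge> 1" and ab: "0 < a0" "a0 < b0"
    and G: "rep s X w" "X \<subseteq> {a0<..<b0}" "\<forall>x\<in>X. w x > 0" "X = {t. poly (qpoly s m) t = 0}"
    and q0: "qpoly s m \<noteq> 0"
  shows "t_infty s = ereal (\<Sum>x\<in>X. w x / x)"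
proof -
  define cs where "cs = (\<Sum>x\<in>X. w x / x)"
  define q where "q = qpoly s m"
  have finX: "finite X" using G by (simp add: rep_def)
  have Xpos: "X \<subseteq> {0<..}" using G ab by auto
  have dq: "degree q \<le> m" by (simp add: q_def degree_qpoly)
  have qX: "x \<in> X \<Longrightarrow> poly q x = 0" for x using G by (simp add: q_def)
  have q00: "poly q 0 \<noteq> 0" using G ab by (auto simp: q_def)
  obtain c0 R where q2: "q * q = pCons c0 R" by (cases "q * q") auto
  have c0: "c0 = (poly q 0)^2"
    using arg_cong[OF q2, of "\<lambda>p. poly p 0"] by (simp add: power2_eq_square)
  have c0pos: "c0 > 0" using q00 c0 by simp
  have dR: "degree R < length s"
  proof (cases "R = 0")
    case True then show ?thesis using len m1 by simp
  next
    case False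
    have "degree (q * q) \<le> 2 * m" using degree_mult_le[of q q] dq by simp
    then show ?thesis using False q2 len by simp
  qed
  have sfR: "seq_functional s R = - c0 * cs"
  proof -
    have "seq_functional s R = (\<Sum>x\<in>X. w x * poly R x)" using G dR by (simp add: rep_def)
    also have "\<dots> = (\<Sum>x\<in>X. - c0 * (w x / x))"
    proof (rule sum.cong[OF refl])
      fix x assume x: "x \<in> X"
      have "poly (q * q) x = 0" using qX[OF x] by simp
      then have "c0 + x * poly R x = 0" using q2 by simp
      moreover have "x > 0" using x Xpos by auto
      ultimately have "poly R x = - c0 / x" by (simp add: field_simps)
      then show "w x * poly R x = - c0 * (w x / x)" by simp
    qed
    also have "\<dots> = - c0 * cs" by (simp add: cs_def sum_distrib_left)
    finally show ?thesis .
  qed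
  have lb: "cs \<le> (\<integral>x. 1 / x \<partial>M)" if a: "0 < a" and M: "M \<in> moment_measures a b s" for a b M
  proof -
    note mb = mm_basic[OF M]
    interpret finite_measure M by (rule mb(2))
    have AEp: "AE x in M. a \<le> x" using mb(4) by eventually_elim auto
    have meas1: "(\<lambda>x::real. 1 / x) \<in> borel_measurable M"
      unfolding measurable_cong_sets[OF mb(1) refl] by measurable
    have int1: "integrable M (\<lambda>x::real. 1 / x)"
    proof (rule integrable_const_bound[where B="1/a"])
      show "AE x in M. norm (1 / x) \<le> 1 / a"
        using AEp by eventually_elim (use a in \<open>auto simp: field_simps\<close>)
    qed (rule meas1)
    have intR: "integrable M (\<lambda>x. poly R x)" "(\<integral>x. poly R x \<partial>M) = seq_functional s R"
      using mm_poly[OF M dR] by auto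
    have "0 \<le> (\<integral>x. c0 * (1 / x) + poly R x \<partial>M)"
    proof (rule integral_nonneg_AE)
      show "AE x in M. 0 \<le> c0 * (1 / x) + poly R x"
        using AEp
      proof eventually_elim
        case (elim x)
        then have xp: "x > 0" using a by simp
        have "c0 * (1 / x) + poly R x = poly (pCons c0 R) x / x" using xp by (simp add: field_simps)
        also have "\<dots> = (poly q x)^2 / x" using q2[symmetric] by (simp add: power2_eq_square)
        finally show ?case using xp by simp
      qed
    qed
    also have "(\<integral>x. c0 * (1 / x) + poly R x \<partial>M) = (\<integral>x. c0 * (1 / x) \<partial>M) + (\<integral>x. poly R x \<partial>M)"
      by (rule Bochner_Integration.integral_add[OF integrable_mult_right[OF int1] intR(1)])
    also have "(\<integral>x. c0 * (1 / x) \<partial>M) = c0 * (\<integral>x. 1 / x \<partial>M)"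
      by (rule integral_mult_right_zero)
    also have "(\<integral>x. poly R x \<partial>M) = seq_functional s R" by (rule intR(2))
    finally have "0 \<le> c0 * ((\<integral>x. 1 / x \<partial>M) - cs)" using sfR by (simp add: algebra_simps)
    then show ?thesis using c0pos by (simp add: zero_le_mult_iff)
  qed
  have tab: "ereal cs \<le> t_ab a b s" if "0 < a" for a b
    unfolding t_ab_def by (rule Inf_greatest) (use lb[OF that] in auto)
  have ge: "ereal cs \<le> t_infty s"
    unfolding t_infty_def by (intro INF_greatest) (use tab in auto)
  define \<mu> where "\<mu> = pmeas X w"
  have wnn: "\<forall>x\<in>X. w x \<ge> 0" using G by (auto simp: less_imp_le)
  have muin: "\<mu> \<in> moment_measures a0 b0 s"
    unfolding \<mu>_def by (rule pmeas_moment[OF G(1) _ wnn]) (use G in auto)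
  have meas2: "(\<lambda>x::real. 1 / x) \<in> borel_measurable borel" by measurable
  have "(\<integral>x. 1 / x \<partial>\<mu>) = (\<Sum>x\<in>X. w x * (1 / x))"
    unfolding \<mu>_def by (rule pmeas_integral(2)[OF finX wnn meas2])
  then have intmu: "(\<integral>x. 1 / x \<partial>\<mu>) = cs" by (simp add: cs_def)
  have "t_ab a0 b0 s \<le> ereal cs"
    unfolding t_ab_def by (rule Inf_lower2[of "ereal (\<integral>x. 1 / x \<partial>\<mu>)"]) (use muin intmu in auto)
  then have le: "t_infty s \<le> ereal cs"
    unfolding t_infty_def using ab by (intro INF_lower2[of a0] INF_lower2[of b0]) auto
  show ?thesis using ge le by (simp add: cs_def)
qed



lemma uniq:
  assumes len: "length s = 2*m" and m1: "m \<ge> 1" and ab: "0 < a0" "a0 < b0"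
    and G: "rep s X w" "X \<subseteq> {a0<..<b0}" "card X = m" "\<forall>x\<in>X. w x > 0" "X = {t. poly (qpoly s m) t = 0}"
    and q0: "qpoly s m \<noteq> 0" and c: "c = (\<Sum>x\<in>X. w x / x)"
  shows "(\<exists>!M. M \<in> moment_measures_pos_reals (c # s)) \<and>
         (\<forall>M\<in>moment_measures_pos_reals (c # s).
               atoms M = {t. Q_det s m t = 0} \<and> emeasure M (UNIV - atoms M) = 0)"
proof -
  define q where "q = qpoly s m"
  define v where "v x = w x / x" for x
  have finX: "finite X" using G by (simp add: rep_def)
  have Xpos: "X \<subseteq> {0<..}" using G ab by auto
  have sne: "s \<noteq> []" using len m1 by auto
  have vpos: "\<forall>x\<in>X. v x > 0" using G(4) Xpos by (auto simp: v_def)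
  have vnn: "\<forall>x\<in>X. v x \<ge> 0" using vpos by (auto simp: less_imp_le)
  have F: "\<forall>P. degree P < length (c # s) \<longrightarrow> seq_functional (c # s) P = (\<Sum>x\<in>X. v x * poly P x)"
    using shift_rep[OF G(1) Xpos sne, of c] c by (simp add: v_def)
  have rep0: "rep (c # s) X v" unfolding rep_def using F finX by simp
  have qX: "poly q x = 0 \<longleftrightarrow> x \<in> X" for x using G by (simp add: q_def)
  have qX0: "x \<in> X \<Longrightarrow> poly q x = 0" for x using qX by blast
  have dq: "degree q \<le> m" by (simp add: q_def degree_qpoly)
  have dqq: "degree (q * q) < length (c # s)" using degree_mult_le[of q q] dq len by simp
  define \<nu> where "\<nu> = pmeas X v"
  have nuin: "\<nu> \<in> moment_measures a0 b0 (c # s)"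
    unfolding \<nu>_def by (rule pmeas_moment[OF rep0 _ vnn]) (use G in auto)
  have nuin': "\<nu> \<in> moment_measures_pos_reals (c # s)"
    unfolding moment_measures_pos_reals_def using nuin ab by blast
  have Xs: "X \<in> sets borel" using finX by (intro borel_closed finite_imp_closed)
  have nuA: "A \<in> sets borel \<Longrightarrow> emeasure \<nu> A = (\<Sum>x\<in>A \<inter> X. ennreal (v x))" for A
    unfolding \<nu>_def by (rule pmeas_emeasure[OF finX])
  have all_eq: "M = \<nu>" if M0: "M \<in> moment_measures_pos_reals (c # s)" for M
  proof -
    obtain a b where abM: "0 < a" "a < b" "M \<in> moment_measures a b (c # s)"
      using M0 unfolding moment_measures_pos_reals_def by blast
    note M = abM(3)
    note mb = mm_basic[OF M]
    interpret finite_measure M by (rule mb(2))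
    have intq: "integrable M (\<lambda>x. poly (q * q) x)" "(\<integral>x. poly (q * q) x \<partial>M) = seq_functional (c # s) (q * q)"
      using mm_poly[OF M dqq] by auto
    have "seq_functional (c # s) (q * q) = 0" using F dqq qX0 by simp
    then have "(\<integral>x. poly (q * q) x \<partial>M) = 0" using intq by simp
    moreover have "AE x in M. 0 \<le> poly (q * q) x" by simp
    ultimately have "AE x in M. poly (q * q) x = 0"
      using integral_nonneg_eq_0_iff_AE[OF intq(1)] by simp
    then have AEX: "AE x in M. x \<in> X" by eventually_elim (simp add: qX)
    have sing: "{x} \<in> sets M" for x using mb(1) by simp
    have MA: "emeasure M A = (\<Sum>x\<in>A \<inter> X. emeasure M {x})" if A: "A \<in> sets borel" for A
    proof -
      have "emeasure M A = emeasure M (A \<inter> X)"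
        by (rule emeasure_eq_AE) (use AEX A Xs mb(1) in auto)
      also have "\<dots> = (\<Sum>x\<in>A \<inter> X. emeasure M {x})"
        by (rule emeasure_eq_sum_singleton) (use finX sing in auto)
      finally show ?thesis .
    qed
    have wts: "measure M {x0} = v x0" if x0: "x0 \<in> X" for x0
    proof -
      define l where "l = lag X x0"
      have dl: "degree l < length (c # s)"
        using degree_lag[OF finX x0] G(3) len m1 by (simp add: l_def)
      have il: "integrable M (\<lambda>x. poly l x)" "(\<integral>x. poly l x \<partial>M) = seq_functional (c # s) l"
        using mm_poly[OF M dl] by auto
      have "seq_functional (c # s) l = (\<Sum>y\<in>X. v y * poly l y)" using F dl by blast
      also have "\<dots> = (\<Sum>y\<in>X. if y = x0 then v y else 0)"
        by (rule sum.cong[OF refl]) (use finX x0 in \<open>auto simp: l_def poly_lag\<close>)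
      also have "\<dots> = v x0" using finX x0 by simp
      finally have e1: "(\<integral>x. poly l x \<partial>M) = v x0" using il by simp
      have intind: "integrable M (\<lambda>x. poly l y * indicator {y} x)" for y
        using sing[of y] by (intro integrable_mult_right integrable_indicator) (auto simp: less_top[symmetric])
      have "(\<integral>x. poly l x \<partial>M) = (\<integral>x. (\<Sum>y\<in>X. poly l y * indicator {y} x) \<partial>M)"
      proof (rule integral_cong_AE)
        show "(\<lambda>x. poly l x) \<in> borel_measurable M" using il(1) by (rule borel_measurable_integrable)
        show "(\<lambda>x. \<Sum>y\<in>X. poly l y * indicator {y} x) \<in> borel_measurable M"
          by (rule borel_measurable_integrable, rule Bochner_Integration.integrable_sum, rule intind)
        show "AE x in M. poly l x = (\<Sum>y\<in>X. poly l y * indicator {y} x)"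
          using AEX
        proof eventually_elim
          case (elim x)
          have "(\<Sum>y\<in>X. poly l y * indicator {y} x) = (\<Sum>y\<in>X. if y = x then poly l x else 0)"
            by (rule sum.cong[OF refl]) (auto simp: indicator_def)
          also have "\<dots> = poly l x" using elim finX by simp
          finally show ?case by simp
        qed
      qed
      also have "\<dots> = (\<Sum>y\<in>X. (\<integral>x. poly l y * indicator {y} x \<partial>M))"
        by (rule Bochner_Integration.integral_sum) (rule intind)
      also have "\<dots> = (\<Sum>y\<in>X. poly l y * measure M {y})"
        by (rule sum.cong[OF refl]) (simp add: mb(3))
      also have "\<dots> = (\<Sum>y\<in>X. if y = x0 then measure M {y} else 0)"
        by (rule sum.cong[OF refl]) (use finX x0 in \<open>auto simp: l_def poly_lag\<close>)
      also have "\<dots> = measure M {x0}" using finX x0 by simp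
      finally show ?thesis using e1 by simp
    qed
    show "M = \<nu>"
    proof (rule measure_eqI)
      show "sets M = sets \<nu>" using mb(1) by (simp add: \<nu>_def)
      fix A assume "A \<in> sets M"
      then have A: "A \<in> sets borel" using mb(1) by simp
      have "emeasure M A = (\<Sum>x\<in>A \<inter> X. emeasure M {x})" by (rule MA[OF A])
      also have "\<dots> = (\<Sum>x\<in>A \<inter> X. ennreal (v x))"
        by (rule sum.cong[OF refl]) (simp add: emeasure_eq_measure wts)
      also have "\<dots> = emeasure \<nu> A" using nuA[OF A] by simp
      finally show "emeasure M A = emeasure \<nu> A" .
    qed
  qed
  have atomsnu: "atoms \<nu> = X"
  proof -
    have "emeasure \<nu> {x} = (if x \<in> X then ennreal (v x) else 0)" for x
      using nuA[of "{x}"] by auto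
    then show ?thesis using vpos by (auto simp: atoms_def)
  qed
  have cs: "UNIV - X \<in> sets borel" using sets.compl_sets[OF Xs] by simp
  have "(UNIV - X) \<inter> X = {}" by blast
  then have "emeasure \<nu> (UNIV - X) = 0" using nuA[OF cs] by simp
  then have nu0: "emeasure \<nu> (UNIV - atoms \<nu>) = 0" using atomsnu by simp
  have QX: "{t. Q_det s m t = 0} = X" using G by (simp add: Q_poly)
  show ?thesis
  proof
    show "\<exists>!M. M \<in> moment_measures_pos_reals (c # s)"
      using nuin' all_eq by blast
    show "\<forall>M\<in>moment_measures_pos_reals (c # s). atoms M = {t. Q_det s m t = 0} \<and> emeasure M (UNIV - atoms M) = 0"
      using all_eq atomsnu nu0 QX by auto
  qed
qed



lemma odd_pkg:
  assumes "length s = 2*m" "m \<ge> 1" "0 < a0" "a0 < b0" "strictly_positive_on a0 b0 s"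
  obtains X w where "rep s X w" "X \<subseteq> {a0<..<b0}" "card X = m" "\<forall>x\<in>X. w x > 0"
    "X = {t. poly (qpoly s m) t = 0}" "qpoly s m \<noteq> 0"
proof -
  have "coeff (qpoly s m) m \<noteq> 0" using qpoly_lead[OF assms(5)] assms(1) by (simp add: coeff_qpoly)
  then have q0: "qpoly s m \<noteq> 0" by auto
  from gauss[OF assms(1,2,4,5)] that q0 show ?thesis by blast
qed

theorem corollary5p5:
  fixes n :: nat and s :: "real list" and s_m1 :: real
  assumes "length s = n + 1"
    and "\<forall>x\<in>set s. x \<ge> 0"
    and "strictly_positive_on_pos_reals s"
    and "s_m1 \<ge> 0"
  shows "((positive_on_pos_reals (s_m1 # s) \<and> \<not> strictly_positive_on_pos_reals (s_m1 # s))
           \<longleftrightarrow> (odd n \<and> ereal s_m1 = t_infty s)) \<and>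
         (\<forall>m. positive_on_pos_reals (s_m1 # s) \<and> \<not> strictly_positive_on_pos_reals (s_m1 # s)
           \<and> n + 1 = 2 * m \<longrightarrow>
           (\<exists>!M. M \<in> moment_measures_pos_reals (s_m1 # s)) \<and>
           (\<forall>M\<in>moment_measures_pos_reals (s_m1 # s).
               atoms M = {t. Q_det s m t = 0} \<and> emeasure M (UNIV - atoms M) = 0))"
proof -
  obtain a0 b0 where ab: "0 < a0" "a0 < b0" "strictly_positive_on a0 b0 s"
    using assms(3) unfolding strictly_positive_on_pos_reals_def by blast
  let ?I = "positive_on_pos_reals (s_m1 # s) \<and> \<not> strictly_positive_on_pos_reals (s_m1 # s)"
  have oddc: "?I \<longleftrightarrow> ereal s_m1 = t_infty s" if m: "n + 1 = 2 * m" for m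
  proof -
    have len: "length s = 2 * m" using assms(1) m by simp
    have m1: "m \<ge> 1" using m by simp
    obtain X w where G: "rep s X w" "X \<subseteq> {a0<..<b0}" "card X = m" "\<forall>x\<in>X. w x > 0"
      "X = {t. poly (qpoly s m) t = 0}" "qpoly s m \<noteq> 0"
      using odd_pkg[OF len m1 ab] by blast
    have "?I \<longleftrightarrow> s_m1 = (\<Sum>x\<in>X. w x / x)"
      by (rule odd_case_c[OF len m1 ab(1,2) G])
    moreover have "t_infty s = ereal (\<Sum>x\<in>X. w x / x)"
      by (rule tinf[OF len m1 ab(1,2) G(1,2,4,5,6)])
    ultimately show ?thesis by simp
  qed
  have partA: "?I \<longleftrightarrow> (odd n \<and> ereal s_m1 = t_infty s)"
  proof
    assume I: ?I
    have "odd n"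
    proof (rule ccontr)
      assume "\<not> odd n"
      then obtain m where "n = 2 * m" by (metis evenE)
      then have len: "length s = 2 * m + 1" using assms(1) by simp
      show False using even_case_false[OF len ab] I by blast
    qed
    then obtain k where k: "n = 2*k+1" by (rule oddE)
    then have m: "n + 1 = 2 * (k+1)" by simp
    show "odd n \<and> ereal s_m1 = t_infty s" using oddc[OF m] I \<open>odd n\<close> by blast
  next
    assume A: "odd n \<and> ereal s_m1 = t_infty s"
    then have "odd n" by blast
    then obtain k where k: "n = 2*k+1" by (rule oddE)
    then have m: "n + 1 = 2 * (k+1)" by simp
    show ?I using oddc[OF m] A by blast
  qed
  have partB: "\<forall>m. ?I \<and> n + 1 = 2 * m \<longrightarrow>
           (\<exists>!M. M \<in> moment_measures_pos_reals (s_m1 # s)) \<and>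
           (\<forall>M\<in>moment_measures_pos_reals (s_m1 # s).
               atoms M = {t. Q_det s m t = 0} \<and> emeasure M (UNIV - atoms M) = 0)"
  proof (intro allI impI)
    fix m assume H: "?I \<and> n + 1 = 2 * m"
    have len: "length s = 2 * m" using assms(1) H by simp
    have m1: "m \<ge> 1" using H by simp
    obtain X w where G: "rep s X w" "X \<subseteq> {a0<..<b0}" "card X = m" "\<forall>x\<in>X. w x > 0"
      "X = {t. poly (qpoly s m) t = 0}" "qpoly s m \<noteq> 0"
      using odd_pkg[OF len m1 ab] by blast
    have c: "s_m1 = (\<Sum>x\<in>X. w x / x)"
      using odd_case_c[OF len m1 ab(1,2) G] H by blast
    show "(\<exists>!M. M \<in> moment_measures_pos_reals (s_m1 # s)) \<and>
           (\<forall>M\<in>moment_measures_pos_reals (s_m1 # s).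
               atoms M = {t. Q_det s m t = 0} \<and> emeasure M (UNIV - atoms M) = 0)"
      by (rule uniq[OF len m1 ab(1,2) G c])
  qed
  show ?thesis using partA partB by blast
qed


end
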